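(* Suppose the hospitals' preferences satisfy CPI with respect to $P^0_{hp}\in\mathbb{L}(D\cup\{\emptyset\})$, where for every couple $\{f,m\}\in C$ the labels are such that $f\,P^0_{hp}\,m$. If $P^0_{hp}$ does not satisfy SCPI, then there exists an RVT extension of $P^0_{hp}$ — a preference profile in which the hospitals' preferences satisfy CPI with respect to $P^0_{hp}$ and every couple's preference satisfies RVT with respect to the individual preferences of its two members — at which no stable matching exists.
   Context: Standing model. Let $H$ be a finite set of hospitals with $|H|\ge 2$; each $h\in H$ has a capacity $\kappa_h\in\mathbb{N}$ with $\kappa_h\ge 2$. Write $\bar H=H\cup\{\emptyset\}$, where being assigned $\emptyset$ means being unmatched. The finite set of doctors is $D=F\cup M\cup S$ (pairwise disjoint), with $F=\{f_1,\dots,f_k\}$, $M=\{m_1,\dots,m_k\}$, $k\ge 1$; the set of couples is $C=\{\{f_1,m_1\},\dots,\{f_k,m_k\}\}$, and doctors in $S$ are called single doctors. Assume $|D|\ge 4$ and $\sum_{h\in H}\kappa_h=|D|$. A matching is a map $\mu$ assigning to each $h\in H$ a set $\mu(h)\subseteq D$ with $|\mu(h)|\le\kappa_h$ and to each doctor $d$ an element $\mu(d)\in\bar H$, such that $\mu(d)=h$ iff $d\in\mu(h)$; for a couple $c=\{f,m\}$ write $\mu(c)=(\mu(f),\mu(m))$. For a set $X$, $\mathbb{L}(X)$ is the set of strict linear orders (preferences) on $X$; for a preference $P$, $R$ denotes its reflexive version ($xRy$ iff $x=y$ or $xPy$), and $r_1(P)$ its top element. Each hospital $h$ has a preference $\tilde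 P_h\in\mathbb{L}(D\cup\{\emptyset\})$ over individual doctors with $d\,\tilde P_h\,\emptyset$ for all $d\in D$, and a preference $P_h$ over the feasible sets $\{D'\subseteq D:|D'|\le\kappa_h\}$ that is responsive with respect to $\tilde P_h$: (i) on singletons and $\emptyset$, $P_h$ agrees with $\tilde P_h$; (ii) for all $D'\subsetneq D$ and all $D_1,D_2\subseteq D\setminus D'$ with $|D'\cup D_1|\le\kappa_h$, $|D'\cup D_2|\le\kappa_h$: $(D'\cup D_1)\,P_h\,(D'\cup D_2)$ iff $D_1\,P_h\,D_2$. Each doctor $d\in D$ has a preference $P_d\in\mathbb{L}(\bar H)$ with $h\,P_d\,\emptyset$ for all $h\in H$. Each couple $c=\{f,m\}$ has a preference $P_c\in\mathbb{L}(\bar H^2)$, where the pair $(h,h')$ means $f$ is assigned $h$ and $m$ is assigned $h'$; every pair in $H^2$ is preferred under $P_c$ to every pair in $\bar H^2\setminus H^2$. A preference profile consists of such preferences for all doctors, all couples and all hospitals. Blocking and stability. At a matching $\mu$, hospital $h$ is interested in a set $D'\subseteq D$ if there is $D''\subseteq\mu(h)$ with $|(\mu(h)\setminus D'')\cup D'|\le\kappa_h$ and $((\mu(h)\setminus D'')\cup D')\,P_h\,\mu(h)$. A pair $(h,s)$ with $h\in H$, $s\in S$ blocks $\mu$ if $h\,P_s\,\mu(s)$ and $h$ is interested in $\{s\}$. For a couple $c=\{f,m\}$ and $h_f,h_m\in H$, $((h_f,h_m),c)$ blocks $\mu$ if $(h_f,h_m)\,P_c\,\mu(c)$ and: (i)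 if $h_f\ne h_m$, $\mu(f)\ne h_f$ and $\mu(m)\ne h_m$, then $h_f$ is interested in $\{f\}$ and $h_m$ is interested in $\{m\}$; (ii) if $h_f\ne h_m$ and, for $\{x,y\}=\{f,m\}$, $\mu(x)=h_x$ and $\mu(y)\neq h_y$, then $h_y$ is interested in $\{y\}$; (iii) if $h_f=h_m=h$, then $h$ is interested in $\{f,m\}$. A matching is stable if it is blocked by no such pair. Responsive couple preference: $P_c$ for $c=\{f,m\}$ is responsive w.r.t. $P_f,P_m$ if for all $h,h_1,h_2\in\bar H$: $(h,h_1)P_c(h,h_2)$ iff $h_1P_mh_2$, and $(h_1,h)P_c(h_2,h)$ iff $h_1P_fh_2$. RVT (responsiveness violated for togetherness): a couple preference $\bar P_c\in\mathbb{L}(\bar H^2)$ of $c=\{f,m\}$ satisfies RVT w.r.t. $P_f,P_m$ if there is a preference $P_c\in\mathbb{L}(\bar H^2)$ responsive w.r.t. $P_f,P_m$ such that (i) for all $h\in H$ and $(h_1,h_2)\in\bar H^2$, $(h,h)P_c(h_1,h_2)$ implies $(h,h)\bar P_c(h_1,h_2)$; (ii) for all $(h,h'),(h_1,h_2)\in\bar H^2$ with $h\ne h'$ and $h_1\ne h_2$, $(h,h')P_c(h_1,h_2)$ iff $(h,h')\bar P_c(h_1,h_2)$. CPI: the hospitals' preferences satisfy CPI (common preference over individual doctors) with respect to $P^0_{hp}\in\mathbb{L}(D\cup\{\emptyset\})$ if every $P_h$ is responsive with respect to $P^0_{hp}$ (i.e. $\tilde P_h=P^0_{hp}$ for all $h$).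 SCPI: $P^0_{hp}$ (with $f\,P^0_{hp}\,m$ for every couple) satisfies SCPI (strong CPI) if for every couple $\{f,m\}\in C$: (i) if $m$ is not the lowest-ranked doctor of $D$ under $P^0_{hp}$, then either $|\{d\in D: f\,P^0_{hp}\,d\,P^0_{hp}\,m\}|=0$ or $|\{d\in D: d\,P^0_{hp}\,m\}|<\kappa_h$ for all $h\in H$; (ii) if $m$ is the lowest-ranked doctor of $D$ under $P^0_{hp}$, then $|\{d\in D: f\,P^0_{hp}\,d\,P^0_{hp}\,m\}|\le 1$. *)

theory Defs
  imports Main
begin

text \<open>Preferences are strict linear orders, given as relations: (x,y) in P means x is
  strictly preferred to y.  The outside option (being unmatched / the empty set of doctors)
  is represented by None.\<close>

definition pref_on :: "'a set \<Rightarrow> 'a rel \<Rightarrow> bool" where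
  "pref_on X P \<longleftrightarrow> P \<subseteq> X \<times> X \<and> strict_linear_order_on X P"

definition doctors :: "'d set \<Rightarrow> ('d \<times> 'd) set \<Rightarrow> 'd set" where
  "doctors S C = S \<union> fst ` C \<union> snd ` C"

definition standing_model :: "'h set \<Rightarrow> ('h \<Rightarrow> nat) \<Rightarrow> 'd set \<Rightarrow> ('d \<times> 'd) set \<Rightarrow> bool" where
  "standing_model H \<kappa> S C \<longleftrightarrow>
     finite H \<and> card H \<ge> 2 \<and> (\<forall>h\<in>H. \<kappa> h \<ge> 2) \<and>
     finite S \<and> finite C \<and> C \<noteq> {} \<and>
     inj_on fst C \<and> inj_on snd C \<and>
     fst ` C \<inter> snd ` C = {} \<and> fst ` C \<inter> S = {} \<and> snd ` C \<inter> S = {} \<and>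
     card (doctors S C) \<ge> 4 \<and> (\<Sum>h\<in>H. \<kappa> h) = card (doctors S C)"

definition Hbar :: "'h set \<Rightarrow> 'h option set" where
  "Hbar H = insert None (Some ` H)"

definition feasible_sets :: "'d set \<Rightarrow> nat \<Rightarrow> 'd set set" where
  "feasible_sets D k = {D'. D' \<subseteq> D \<and> card D' \<le> k}"

definition indiv_hosp_pref :: "'d set \<Rightarrow> 'd option rel \<Rightarrow> bool" where
  "indiv_hosp_pref D P \<longleftrightarrow> pref_on (insert None (Some ` D)) P \<and> (\<forall>d\<in>D. (Some d, None) \<in> P)"

definition opt_set :: "'d option \<Rightarrow> 'd set" where
  "opt_set x = (case x of None \<Rightarrow> {} | Some d \<Rightarrow> {d})"

definition responsive_hosp :: "'d set \<Rightarrow> nat \<Rightarrow> 'd option rel \<Rightarrow> 'd set rel \<Rightarrow> bool" where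
  "responsive_hosp D k Pt P \<longleftrightarrow>
     (\<forall>x\<in>insert None (Some ` D). \<forall>y\<in>insert None (Some ` D).
        (opt_set x, opt_set y) \<in> P \<longleftrightarrow> (x, y) \<in> Pt) \<and>
     (\<forall>D' D1 D2. D' \<subset> D \<longrightarrow> D1 \<subseteq> D - D' \<longrightarrow> D2 \<subseteq> D - D' \<longrightarrow>
        card (D' \<union> D1) \<le> k \<longrightarrow> card (D' \<union> D2) \<le> k \<longrightarrow>
        ((D' \<union> D1, D' \<union> D2) \<in> P \<longleftrightarrow> (D1, D2) \<in> P))"

definition hosp_pref_CPI :: "'d set \<Rightarrow> nat \<Rightarrow> 'd option rel \<Rightarrow> 'd set rel \<Rightarrow> bool" where
  "hosp_pref_CPI D k P0 P \<longleftrightarrow>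
     pref_on (feasible_sets D k) P \<and> indiv_hosp_pref D P0 \<and> responsive_hosp D k P0 P"

definition doctor_pref :: "'h set \<Rightarrow> 'h option rel \<Rightarrow> bool" where
  "doctor_pref H P \<longleftrightarrow> pref_on (Hbar H) P \<and> (\<forall>h\<in>H. (Some h, None) \<in> P)"

definition couple_pref :: "'h set \<Rightarrow> ('h option \<times> 'h option) rel \<Rightarrow> bool" where
  "couple_pref H P \<longleftrightarrow> pref_on (Hbar H \<times> Hbar H) P \<and>
     (\<forall>a\<in>Some ` H \<times> Some ` H. \<forall>b\<in>(Hbar H \<times> Hbar H) - (Some ` H \<times> Some ` H). (a, b) \<in> P)"

definition responsive_couple ::
  "'h set \<Rightarrow> 'h option rel \<Rightarrow> 'h option rel \<Rightarrow> ('h option \<times> 'h option) rel \<Rightarrow> bool" where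
  "responsive_couple H Pf Pm Pc \<longleftrightarrow>
     (\<forall>h\<in>Hbar H. \<forall>h1\<in>Hbar H. \<forall>h2\<in>Hbar H.
        (((h, h1), (h, h2)) \<in> Pc \<longleftrightarrow> (h1, h2) \<in> Pm) \<and>
        (((h1, h), (h2, h)) \<in> Pc \<longleftrightarrow> (h1, h2) \<in> Pf))"

definition RVT ::
  "'h set \<Rightarrow> 'h option rel \<Rightarrow> 'h option rel \<Rightarrow> ('h option \<times> 'h option) rel \<Rightarrow> bool" where
  "RVT H Pf Pm Pbar \<longleftrightarrow>
     (\<exists>Pc. pref_on (Hbar H \<times> Hbar H) Pc \<and> responsive_couple H Pf Pm Pc \<and>
        (\<forall>h\<in>H. \<forall>x\<in>Hbar H \<times> Hbar H.
            ((Some h, Some h), x) \<in> Pc \<longrightarrow> ((Some h, Some h), x) \<in> Pbar) \<and>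
        (\<forall>h\<in>Hbar H. \<forall>h'\<in>Hbar H. \<forall>h1\<in>Hbar H. \<forall>h2\<in>Hbar H. h \<noteq> h' \<longrightarrow> h1 \<noteq> h2 \<longrightarrow>
            (((h, h'), (h1, h2)) \<in> Pc \<longleftrightarrow> ((h, h'), (h1, h2)) \<in> Pbar)))"

text \<open>Matchings: mu d is the assignment of doctor d (None = unmatched);
  the set assigned to hospital h is assigned D mu h.\<close>
definition assigned :: "'d set \<Rightarrow> ('d \<Rightarrow> 'h option) \<Rightarrow> 'h \<Rightarrow> 'd set" where
  "assigned D \<mu> h = {d\<in>D. \<mu> d = Some h}"

definition is_matching :: "'h set \<Rightarrow> ('h \<Rightarrow> nat) \<Rightarrow> 'd set \<Rightarrow> ('d \<Rightarrow> 'h option) \<Rightarrow> bool" where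
  "is_matching H \<kappa> D \<mu> \<longleftrightarrow>
     (\<forall>d\<in>D. \<mu> d \<in> Hbar H) \<and> (\<forall>h\<in>H. card (assigned D \<mu> h) \<le> \<kappa> h)"

definition interested ::
  "('h \<Rightarrow> nat) \<Rightarrow> 'd set \<Rightarrow> ('h \<Rightarrow> 'd set rel) \<Rightarrow> ('d \<Rightarrow> 'h option) \<Rightarrow> 'h \<Rightarrow> 'd set \<Rightarrow> bool" where
  "interested \<kappa> D Ph \<mu> h D' \<longleftrightarrow>
     (\<exists>D''. D'' \<subseteq> assigned D \<mu> h \<and>
        card ((assigned D \<mu> h - D'') \<union> D') \<le> \<kappa> h \<and>
        ((assigned D \<mu> h - D'') \<union> D', assigned D \<mu> h) \<in> Ph h)"

definition blocks_single ::
  "('h \<Rightarrow> nat) \<Rightarrow> 'd set \<Rightarrow> ('d \<Rightarrow> 'h option rel) \<Rightarrow> ('h \<Rightarrow> 'd set rel) \<Rightarrow> ('d \<Rightarrow> 'h option)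
     \<Rightarrow> 'h \<Rightarrow> 'd \<Rightarrow> bool" where
  "blocks_single \<kappa> D Pd Ph \<mu> h s \<longleftrightarrow>
     (Some h, \<mu> s) \<in> Pd s \<and> interested \<kappa> D Ph \<mu> h {s}"

definition blocks_couple ::
  "('h \<Rightarrow> nat) \<Rightarrow> 'd set \<Rightarrow> ('d \<times> 'd \<Rightarrow> ('h option \<times> 'h option) rel) \<Rightarrow> ('h \<Rightarrow> 'd set rel)
     \<Rightarrow> ('d \<Rightarrow> 'h option) \<Rightarrow> 'h \<Rightarrow> 'h \<Rightarrow> 'd \<times> 'd \<Rightarrow> bool" where
  "blocks_couple \<kappa> D Pc Ph \<mu> hf hm c \<longleftrightarrow>
     (case c of (f, m) \<Rightarrow>
       ((Some hf, Some hm), (\<mu> f, \<mu> m)) \<in> Pc c \<and>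
       (hf \<noteq> hm \<longrightarrow> \<mu> f \<noteq> Some hf \<longrightarrow> \<mu> m \<noteq> Some hm \<longrightarrow>
          interested \<kappa> D Ph \<mu> hf {f} \<and> interested \<kappa> D Ph \<mu> hm {m}) \<and>
       (hf \<noteq> hm \<longrightarrow> \<mu> f = Some hf \<longrightarrow> \<mu> m \<noteq> Some hm \<longrightarrow> interested \<kappa> D Ph \<mu> hm {m}) \<and>
       (hf \<noteq> hm \<longrightarrow> \<mu> m = Some hm \<longrightarrow> \<mu> f \<noteq> Some hf \<longrightarrow> interested \<kappa> D Ph \<mu> hf {f}) \<and>
       (hf = hm \<longrightarrow> interested \<kappa> D Ph \<mu> hf {f, m}))"

definition stable ::
  "'h set \<Rightarrow> ('h \<Rightarrow> nat) \<Rightarrow> 'd set \<Rightarrow> ('d \<times> 'd) set \<Rightarrow> ('d \<Rightarrow> 'h option rel)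
     \<Rightarrow> ('d \<times> 'd \<Rightarrow> ('h option \<times> 'h option) rel) \<Rightarrow> ('h \<Rightarrow> 'd set rel) \<Rightarrow> ('d \<Rightarrow> 'h option) \<Rightarrow> bool" where
  "stable H \<kappa> S C Pd Pc Ph \<mu> \<longleftrightarrow>
     is_matching H \<kappa> (doctors S C) \<mu> \<and>
     (\<forall>h\<in>H. \<forall>s\<in>S. \<not> blocks_single \<kappa> (doctors S C) Pd Ph \<mu> h s) \<and>
     (\<forall>c\<in>C. \<forall>hf\<in>H. \<forall>hm\<in>H. \<not> blocks_couple \<kappa> (doctors S C) Pc Ph \<mu> hf hm c)"

definition SCPI :: "'h set \<Rightarrow> ('h \<Rightarrow> nat) \<Rightarrow> 'd set \<Rightarrow> ('d \<times> 'd) set \<Rightarrow> 'd option rel \<Rightarrow> bool" where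
  "SCPI H \<kappa> S C P0 \<longleftrightarrow>
     (\<forall>(f, m)\<in>C.
        let D = doctors S C;
            lowest = (\<forall>d\<in>D. d \<noteq> m \<longrightarrow> (Some d, Some m) \<in> P0);
            btw = card {d\<in>D. (Some f, Some d) \<in> P0 \<and> (Some d, Some m) \<in> P0};
            above = card {d\<in>D. (Some d, Some m) \<in> P0}
        in (\<not> lowest \<longrightarrow> (btw = 0 \<or> (\<forall>h\<in>H. above < \<kappa> h))) \<and>
           (lowest \<longrightarrow> btw \<le> 1))"

end

theory Submission
  imports Defs
begin

lemma pref_on_key:
  fixes k :: "'a \<Rightarrow> nat"
  assumes "inj_on k X"
  shows "pref_on X {(a,b). a \<in> X \<and> b \<in> X \<and> k a < k b}"
  using assms unfolding pref_on_def strict_linear_order_on_def trans_def irrefl_def total_on_def inj_on_def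
  by (auto, metis linorder_neqE_nat)

lemma pref_on_key_rev:
  fixes k :: "'a \<Rightarrow> nat"
  assumes "inj_on k X"
  shows "pref_on X {(a,b). a \<in> X \<and> b \<in> X \<and> k b < k a}"
  using assms unfolding pref_on_def strict_linear_order_on_def trans_def irrefl_def total_on_def inj_on_def
  by (auto, metis linorder_neqE_nat)

definition wt :: "'d set \<Rightarrow> 'd option rel \<Rightarrow> 'd \<Rightarrow> nat" where
  "wt D P0 d = card {e \<in> D. (Some d, Some e) \<in> P0}"

locale rankctx =
  fixes D :: "'d set" and P0 :: "'d option rel"
  assumes finD: "finite D"
    and P0pref: "pref_on (insert None (Some ` D)) P0"
begin

lemma P0_trans: "trans P0" and P0_irrefl: "irrefl P0"
  and P0_total: "total_on (insert None (Some ` D)) P0"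
  and P0_sub: "P0 \<subseteq> (insert None (Some ` D)) \<times> (insert None (Some ` D))"
  using P0pref unfolding pref_on_def strict_linear_order_on_def by auto

lemma wt_mono:
  assumes "d \<in> D" "e \<in> D" "(Some d, Some e) \<in> P0"
  shows "wt D P0 e < wt D P0 d"
proof -
  have sub: "{x \<in> D. (Some e, Some x) \<in> P0} \<subset> {x \<in> D. (Some d, Some x) \<in> P0}"
  proof
    show "{x \<in> D. (Some e, Some x) \<in> P0} \<subseteq> {x \<in> D. (Some d, Some x) \<in> P0}"
      using assms P0_trans unfolding trans_def by blast
    have "e \<notin> {x \<in> D. (Some e, Some x) \<in> P0}" using P0_irrefl unfolding irrefl_def by auto
    moreover have "e \<in> {x \<in> D. (Some d, Some x) \<in> P0}" using assms by auto
    ultimately show "{x \<in> D. (Some e, Some x) \<in> P0} \<noteq> {x \<in> D. (Some d, Some x) \<in> P0}" by blast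
  qed
  show ?thesis unfolding wt_def by (rule psubset_card_mono) (use finD sub in auto)
qed

lemma wt_iff:
  assumes "d \<in> D" "e \<in> D"
  shows "(Some d, Some e) \<in> P0 \<longleftrightarrow> wt D P0 e < wt D P0 d"
proof
  assume "(Some d, Some e) \<in> P0" then show "wt D P0 e < wt D P0 d" using wt_mono assms by auto
next
  assume a: "wt D P0 e < wt D P0 d"
  then have "d \<noteq> e" by auto
  then have "(Some d, Some e) \<in> P0 \<or> (Some e, Some d) \<in> P0"
    using P0_total assms unfolding total_on_def by auto
  then show "(Some d, Some e) \<in> P0" using wt_mono[of e d] assms a by auto
qed

lemma wt_inj: "inj_on (wt D P0) D"
proof (rule inj_onI)
  fix d e assume de: "d \<in> D" "e \<in> D" "wt D P0 d = wt D P0 e"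
  show "d = e"
  proof (rule ccontr)
    assume "d \<noteq> e"
    then have "(Some d, Some e) \<in> P0 \<or> (Some e, Some d) \<in> P0"
      using P0_total de unfolding total_on_def by auto
    then show False using wt_mono de by fastforce
  qed
qed

lemma wt_lt: assumes "d \<in> D" shows "wt D P0 d < card D"
proof -
  have "{e \<in> D. (Some d, Some e) \<in> P0} \<subset> D"
    using assms P0_irrefl unfolding irrefl_def by auto
  then show ?thesis unfolding wt_def using finD psubset_card_mono by blast
qed

lemma wt_image: "wt D P0 ` D = {..<card D}"
proof -
  have sub: "wt D P0 ` D \<subseteq> {..<card D}" using wt_lt by auto
  have "card (wt D P0 ` D) = card D" using card_image wt_inj by blast
  then show ?thesis using card_subset_eq[OF _ sub] by simp
qed

lemma wt_ex: assumes "i < card D" shows "\<exists>d\<in>D. wt D P0 d = i"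
  using wt_image assms by (metis imageE lessThan_iff)

end

definition sig :: "('d \<Rightarrow> nat) \<Rightarrow> 'd set \<Rightarrow> nat" where
  "sig w A = (\<Sum>a\<in>A. (2::nat) ^ w a)"

lemma sum_pow2_lessThan: "(\<Sum>i<k. (2::nat)^i) < 2^k"
  by (induction k) auto

lemma sum_pow2_lt:
  assumes "finite N" "\<forall>i\<in>N. i < k"
  shows "(\<Sum>i\<in>N. (2::nat)^i) < 2^k"
proof -
  have "(\<Sum>i\<in>N. (2::nat)^i) \<le> (\<Sum>i<k. (2::nat)^i)"
    by (rule sum_mono2) (use assms in auto)
  then show ?thesis using sum_pow2_lessThan[of k] by linarith
qed

lemma sig_less:
  assumes finD: "finite D" and inj: "inj_on w D" and AD: "A \<subseteq> D" and BD: "B \<subseteq> D"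
    and x: "x \<in> A" "x \<notin> B" and below: "\<forall>y\<in>B - A. w y < w x"
  shows "sig w B < sig w A"
proof -
  have fA: "finite A" and fB: "finite B" using finD AD BD finite_subset by auto
  have eA: "sig w A = sig w (A \<inter> B) + sig w (A - B)"
    unfolding sig_def using fA by (rule sum.Int_Diff)
  have eB: "sig w B = sig w (A \<inter> B) + sig w (B - A)"
    unfolding sig_def using sum.Int_Diff[OF fB, of _ A] by (simp add: Int_commute)
  have "(2::nat) ^ w x \<le> sig w (A - B)" unfolding sig_def
    using x fA by (intro member_le_sum) auto
  moreover have "sig w (B - A) < 2 ^ w x"
  proof -
    have "inj_on w (B - A)" using inj BD by (meson Diff_subset inj_on_subset subset_trans)
    then have "sig w (B - A) = (\<Sum>i\<in>w ` (B - A). (2::nat)^i)"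
      unfolding sig_def by (simp add: sum.reindex)
    also have "\<dots> < 2 ^ w x" using below fB by (intro sum_pow2_lt) auto
    finally show ?thesis .
  qed
  ultimately show ?thesis using eA eB by linarith
qed

lemma sig_inj:
  assumes finD: "finite D" and inj: "inj_on w D"
  shows "inj_on (sig w) (Pow D)"
proof (rule inj_onI)
  fix A B assume A: "A \<in> Pow D" and B: "B \<in> Pow D" and eq: "sig w A = sig w B"
  show "A = B"
  proof (rule ccontr)
    assume ne: "A \<noteq> B"
    let ?X = "(A - B) \<union> (B - A)"
    have fX: "finite ?X" using finD A B finite_subset by blast
    have neX: "?X \<noteq> {}" using ne by blast
    have "Max (w ` ?X) \<in> w ` ?X" using fX neX by (intro Max_in) auto
    then obtain x where xX: "x \<in> ?X" and xm: "w x = Max (w ` ?X)" by (metis imageE)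
    have xmax: "\<forall>y\<in>?X. w y \<le> w x" using xm fX by auto
    have strict: "\<forall>y\<in>?X. y \<noteq> x \<longrightarrow> w y < w x"
    proof (intro ballI impI)
      fix y assume y: "y \<in> ?X" "y \<noteq> x"
      have "y \<in> D" "x \<in> D" using y xX A B by auto
      then have "w y \<noteq> w x" using inj y(2) unfolding inj_on_def by blast
      then show "w y < w x" using xmax y by force
    qed
    show False
    proof (cases "x \<in> A")
      case True
      then have "x \<notin> B" using xX by auto
      have "\<forall>y\<in>B - A. w y < w x" using strict \<open>x \<notin> B\<close> by (metis DiffD1 UnI2)
      then have "sig w B < sig w A" using sig_less[OF finD inj, of A B x] A B True \<open>x \<notin> B\<close> by auto
      then show False using eq by simp
    next
      case False
      then have "x \<in> B" using xX by auto
      have "\<forall>y\<in>A - B. w y < w x" using strict False by (metis DiffD1 DiffD2 UnI1)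
      then have "sig w A < sig w B" using sig_less[OF finD inj, of B A x] A B False \<open>x \<in> B\<close> by auto
      then show False using eq by simp
    qed
  qed
qed

definition lexP :: "'d set \<Rightarrow> ('d \<Rightarrow> nat) \<Rightarrow> nat \<Rightarrow> 'd set rel" where
  "lexP D w k = {(A,B). A \<in> feasible_sets D k \<and> B \<in> feasible_sets D k \<and> sig w B < sig w A}"

lemma interested_I:
  assumes Ph: "Ph h = lexP D w (\<kappa> h)" and finD: "finite D" and inj: "inj_on w D"
    and cardA: "card (assigned D \<mu> h) \<le> \<kappa> h"
    and D2: "D'' \<subseteq> assigned D \<mu> h" and D1: "D' \<subseteq> D"
    and cardN: "card ((assigned D \<mu> h - D'') \<union> D') \<le> \<kappa> h"
    and x: "x \<in> (assigned D \<mu> h - D'') \<union> D'" "x \<notin> assigned D \<mu> h"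
    and below: "\<forall>y\<in>assigned D \<mu> h - ((assigned D \<mu> h - D'') \<union> D'). w y < w x"
  shows "interested \<kappa> D Ph \<mu> h D'"
proof -
  let ?A = "assigned D \<mu> h"
  let ?N = "(?A - D'') \<union> D'"
  have AD: "?A \<subseteq> D" unfolding assigned_def by auto
  have ND: "?N \<subseteq> D" using AD D1 by auto
  have "sig w ?A < sig w ?N" using sig_less[OF finD inj ND AD x below] by simp
  then have "(?N, ?A) \<in> Ph h" unfolding Ph lexP_def feasible_sets_def using AD ND cardA cardN by auto
  then show ?thesis unfolding interested_def using D2 cardN by blast
qed


locale construction =
  fixes H :: "'h set" and \<kappa> :: "'h \<Rightarrow> nat" and S :: "'d set" and C :: "('d \<times> 'd) set"
    and P0 :: "'d option rel"
    and f m g1 g2 z :: 'd and h1 h2 :: 'h and t :: "'d \<Rightarrow> 'h" and idx :: "'h \<Rightarrow> nat"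
  assumes model: "standing_model H \<kappa> S C"
    and P0: "indiv_hosp_pref (doctors S C) P0"
    and labels: "\<forall>(a, b)\<in>C. (Some a, Some b) \<in> P0"
    and fmC: "(f, m) \<in> C"
    and g1D: "g1 \<in> doctors S C" and g2D: "g2 \<in> doctors S C"
    and dist: "g1 \<noteq> f" "g1 \<noteq> m" "g2 \<noteq> f" "g2 \<noteq> m" "g1 \<noteq> g2"
    and h12: "h1 \<in> H" "h2 \<in> H" "h1 \<noteq> h2"
    and wts: "wt (doctors S C) P0 m < wt (doctors S C) P0 g1"
       "wt (doctors S C) P0 g1 < wt (doctors S C) P0 f"
       "wt (doctors S C) P0 g2 < wt (doctors S C) P0 g1"
    and zD: "z \<in> doctors S C"
    and zlow: "\<forall>d\<in>doctors S C. wt (doctors S C) P0 z \<le> wt (doctors S C) P0 d"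
    and zpart: "\<forall>a. (a, z) \<in> C \<longrightarrow> a \<in> {f, g1, m, g2}"
    and g2cond: "wt (doctors S C) P0 m < wt (doctors S C) P0 g2 \<or> g2 = z \<or> (g2, z) \<in> C"
    and tH: "\<forall>d\<in>doctors S C - {f, g1, m, g2}. t d \<in> H"
    and cardV: "card {d\<in>doctors S C - {f, g1, m, g2}. t d = h1} = \<kappa> h1 - 2"
    and cardW: "card {d\<in>doctors S C - {f, g1, m, g2}. t d = h2} = \<kappa> h2 - 2"
    and cardO: "\<forall>h\<in>H - {h1, h2}. card {d\<in>doctors S C - {f, g1, m, g2}. t d = h} = \<kappa> h"
    and Vabove: "\<forall>v\<in>doctors S C - {f, g1, m, g2}. t v = h1 \<longrightarrow>
        wt (doctors S C) P0 g1 < wt (doctors S C) P0 v"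
    and Vtop: "\<forall>v\<in>doctors S C - {f, g1, m, g2}. t v = h1 \<longrightarrow>
        (\<forall>u\<in>doctors S C - {f, g1, m, g2}. t u \<noteq> h1 \<longrightarrow> wt (doctors S C) P0 u < wt (doctors S C) P0 v)"
    and idx_inj: "inj_on idx H" and idx_lt: "\<forall>h\<in>H. idx h < card H"
begin

abbreviation "D \<equiv> doctors S C"
abbreviation "w \<equiv> wt D P0"
abbreviation "G \<equiv> {f, g1, m, g2}"
abbreviation "world \<equiv> D - G"
definition Des :: "'h \<Rightarrow> 'd set" where "Des h = {d\<in>world. t d = h}"

definition top :: "'d \<Rightarrow> 'h" where "top d = (if d \<in> G then h1 else t d)"
definition sec :: "'d \<Rightarrow> 'h" where "sec d = (if d \<in> G then h2 else if t d = h1 then h2 else h1)"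
definition rk :: "'d \<Rightarrow> 'h \<Rightarrow> nat" where
  "rk d h = (if h = top d then 0 else if h = sec d then 1 else idx h + 2)"
definition okey :: "'d \<Rightarrow> 'h option \<Rightarrow> nat" where
  "okey d x = (case x of None \<Rightarrow> card H + 2 | Some h \<Rightarrow> rk d h)"
definition Pd :: "'d \<Rightarrow> 'h option rel" where
  "Pd d = {(x, y). x \<in> Hbar H \<and> y \<in> Hbar H \<and> okey d x < okey d y}"

abbreviation "B \<equiv> card H + 3"
definition ckey :: "'d \<Rightarrow> 'd \<Rightarrow> 'h option \<times> 'h option \<Rightarrow> nat" where
  "ckey a b p = (if fst p \<noteq> None \<and> snd p \<noteq> None then 0 else 1) * B * B + okey a (fst p) * B + okey b (snd p)"
definition skey :: "'h option \<times> 'h option \<Rightarrow> nat" where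
  "skey p = (if p = (Some h1, Some h1) then 0 else if p = (Some h2, Some h2) then 1 else 2 + ckey f m p)"
definition cpkey :: "'d \<times> 'd \<Rightarrow> 'h option \<times> 'h option \<Rightarrow> nat" where
  "cpkey c = (if c = (f, m) then skey else ckey (fst c) (snd c))"
definition Pc :: "'d \<times> 'd \<Rightarrow> ('h option \<times> 'h option) rel" where
  "Pc c = {(p, q). p \<in> Hbar H \<times> Hbar H \<and> q \<in> Hbar H \<times> Hbar H \<and> cpkey c p < cpkey c q}"
definition Ph :: "'h \<Rightarrow> 'd set rel" where
  "Ph h = lexP D w (\<kappa> h)"

lemma finH: "finite H" using model unfolding standing_model_def by auto
lemma finD: "finite D" using model unfolding standing_model_def doctors_def by auto
lemma kappa2: "h \<in> H \<Longrightarrow> 2 \<le> \<kappa> h" using model unfolding standing_model_def by auto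
lemma sumk: "(\<Sum>h\<in>H. \<kappa> h) = card D" using model unfolding standing_model_def by auto
lemma injfst: "inj_on fst C" and injsnd: "inj_on snd C"
  and disj1: "fst ` C \<inter> snd ` C = {}" and disj2: "fst ` C \<inter> S = {}" and disj3: "snd ` C \<inter> S = {}"
  using model unfolding standing_model_def by auto

lemma P0pref: "pref_on (insert None (Some ` D)) P0" using P0 unfolding indiv_hosp_pref_def by auto

interpretation rk0: rankctx D P0 using finD P0pref by unfold_locales

lemma w_iff: "d \<in> D \<Longrightarrow> e \<in> D \<Longrightarrow> (Some d, Some e) \<in> P0 \<longleftrightarrow> w e < w d"
  using rk0.wt_iff by blast
lemma w_inj: "inj_on w D" using rk0.wt_inj .
lemma w_eq: "d \<in> D \<Longrightarrow> e \<in> D \<Longrightarrow> w d = w e \<longleftrightarrow> d = e"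
  using w_inj unfolding inj_on_def by blast

lemma C_D: "(a, b) \<in> C \<Longrightarrow> a \<in> D \<and> b \<in> D" unfolding doctors_def by force
lemma C_w: "(a, b) \<in> C \<Longrightarrow> w b < w a"
  using labels C_D w_iff by blast
lemma fD: "f \<in> D" and mD: "m \<in> D" using C_D fmC by auto
lemma fm_ne: "f \<noteq> m" using C_w[OF fmC] by auto

lemma C_fst_uniq: "(a, b) \<in> C \<Longrightarrow> (a, b') \<in> C \<Longrightarrow> b = b'"
  using injfst unfolding inj_on_def by force
lemma C_snd_uniq: "(a, b) \<in> C \<Longrightarrow> (a', b) \<in> C \<Longrightarrow> a = a'"
  using injsnd unfolding inj_on_def by force
lemma C_not_both: "(a, b) \<in> C \<Longrightarrow> (b', a) \<in> C \<Longrightarrow> False"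
  using disj1 by force
lemma C_notS1: "(a, b) \<in> C \<Longrightarrow> a \<notin> S" using disj2 by force
lemma C_notS2: "(a, b) \<in> C \<Longrightarrow> b \<notin> S" using disj3 by force

lemma D_cases: "d \<in> D \<Longrightarrow> d \<in> S \<or> (\<exists>p. (d, p) \<in> C) \<or> (\<exists>p. (p, d) \<in> C)"
  unfolding doctors_def by force

lemma wf: "w f > w g1" "w f > w m" "w f > w g2" "w g1 > w m" "w g1 > w g2"
  using wts by auto

lemma G_D: "G \<subseteq> D" using fD mD g1D g2D by auto
lemma G_card: "card G = 4" using dist fm_ne by auto

lemma Des_sub: "Des h \<subseteq> world" unfolding Des_def by auto
lemma finDes: "finite (Des h)" using finD Des_sub finite_subset by blast
lemma Des_card1: "card (Des h1) = \<kappa> h1 - 2" using cardV unfolding Des_def .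
lemma Des_card2: "card (Des h2) = \<kappa> h2 - 2" using cardW unfolding Des_def .
lemma Des_cardO: "h \<in> H \<Longrightarrow> h \<noteq> h1 \<Longrightarrow> h \<noteq> h2 \<Longrightarrow> card (Des h) = \<kappa> h"
  using cardO unfolding Des_def by auto
lemma Des_disj: "h \<noteq> h' \<Longrightarrow> Des h \<inter> Des h' = {}" unfolding Des_def by auto

lemma top_sec: "top d \<noteq> sec d" unfolding top_def sec_def using h12 by auto
lemma top_G: "d \<in> G \<Longrightarrow> top d = h1" and sec_G: "d \<in> G \<Longrightarrow> sec d = h2"
  unfolding top_def sec_def by auto
lemma top_w: "d \<notin> G \<Longrightarrow> top d = t d" unfolding top_def by auto

lemma rk_top: "rk d (top d) = 0" unfolding rk_def by auto
lemma rk_pos: "h \<noteq> top d \<Longrightarrow> 0 < rk d h" unfolding rk_def by auto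
lemma rk_G1: "d \<in> G \<Longrightarrow> rk d h1 = 0" using rk_top top_G by metis
lemma rk_G2: "d \<in> G \<Longrightarrow> rk d h2 = 1" unfolding rk_def using top_G sec_G h12 by auto
lemma rk_G3: "d \<in> G \<Longrightarrow> h \<noteq> h1 \<Longrightarrow> h \<noteq> h2 \<Longrightarrow> 2 \<le> rk d h"
  unfolding rk_def using top_G sec_G by auto
lemma rk_bound: "h \<in> H \<Longrightarrow> rk d h < card H + 2" unfolding rk_def using idx_lt by auto
lemma rk_inj: "inj_on (rk d) H"
proof (rule inj_onI)
  fix x y assume "x \<in> H" "y \<in> H" "rk d x = rk d y"
  then show "x = y" unfolding rk_def using idx_inj top_sec unfolding inj_on_def
    by (auto split: if_splits)
qed

lemma okey_inj: "inj_on (okey d) (Hbar H)"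
proof (rule inj_onI)
  fix x y assume xy: "x \<in> Hbar H" "y \<in> Hbar H" "okey d x = okey d y"
  show "x = y"
  proof (cases x; cases y)
    fix a b assume a: "x = Some a" and b: "y = Some b"
    then have "a \<in> H" "b \<in> H" using xy unfolding Hbar_def by auto
    moreover have "rk d a = rk d b" using xy a b unfolding okey_def by simp
    ultimately show "x = y" using rk_inj a b unfolding inj_on_def by auto
  next
    fix a assume a: "x = Some a" and b: "y = None"
    then have "a \<in> H" using xy unfolding Hbar_def by auto
    then have "rk d a < card H + 2" by (rule rk_bound)
    then show "x = y" using xy a b unfolding okey_def by simp
  next
    fix b assume a: "x = None" and b: "y = Some b"
    then have "b \<in> H" using xy unfolding Hbar_def by auto
    then have "rk d b < card H + 2" by (rule rk_bound)
    then show "x = y" using xy a b unfolding okey_def by simp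
  qed simp
qed

lemma okey_bound: "x \<in> Hbar H \<Longrightarrow> okey d x < B"
proof (cases x)
  case (Some a)
  assume "x \<in> Hbar H"
  then have "a \<in> H" using Some unfolding Hbar_def by auto
  then have "rk d a < card H + 2" by (rule rk_bound)
  then show ?thesis using Some unfolding okey_def by simp
qed (simp add: okey_def)

lemma Pd_pref: "doctor_pref H (Pd d)"
  unfolding doctor_pref_def Pd_def
proof
  show "pref_on (Hbar H) {(x, y). x \<in> Hbar H \<and> y \<in> Hbar H \<and> okey d x < okey d y}"
    by (rule pref_on_key[OF okey_inj])
  show "\<forall>h\<in>H. (Some h, None) \<in> {(x, y). x \<in> Hbar H \<and> y \<in> Hbar H \<and> okey d x < okey d y}"
    unfolding Hbar_def okey_def using rk_bound by auto
qed

lemma Pd_Some: "x \<in> H \<Longrightarrow> y \<in> H \<Longrightarrow> (Some x, Some y) \<in> Pd d \<longleftrightarrow> rk d x < rk d y"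
  unfolding Pd_def okey_def Hbar_def by auto

lemma arith3:
  fixes c1 c2 u1 u2 v1 v2 b :: nat
  assumes "u1 < b" "u2 < b" "v1 < b" "v2 < b"
  shows "(c1 * b * b + u1 * b + v1 = c2 * b * b + u2 * b + v2) \<longleftrightarrow> (c1 = c2 \<and> u1 = u2 \<and> v1 = v2)"
proof
  assume eq: "c1 * b * b + u1 * b + v1 = c2 * b * b + u2 * b + v2"
  have b0: "0 < b" using assms by auto
  have r1: "c1 * b * b + u1 * b + v1 = v1 + (c1 * b + u1) * b" by (simp add: algebra_simps)
  have r2: "c2 * b * b + u2 * b + v2 = v2 + (c2 * b + u2) * b" by (simp add: algebra_simps)
  have eq2: "v1 + (c1 * b + u1) * b = v2 + (c2 * b + u2) * b" using eq r1 r2 by simp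
  have "(v1 + (c1 * b + u1) * b) mod b = v1" using assms by simp
  moreover have "(v2 + (c2 * b + u2) * b) mod b = v2" using assms by simp
  ultimately have v: "v1 = v2" using eq2 by metis
  then have e2: "c1 * b + u1 = c2 * b + u2" using eq2 b0 by simp
  have "(u1 + c1 * b) mod b = u1" using assms by simp
  moreover have "(u2 + c2 * b) mod b = u2" using assms by simp
  ultimately have u: "u1 = u2" using e2 by (metis add.commute)
  then have "c1 = c2" using e2 b0 by simp
  then show "c1 = c2 \<and> u1 = u2 \<and> v1 = v2" using u v by simp
qed simp


lemma lexcmp:
  fixes c c' u u' v v' b :: nat
  assumes "u < b" "u' < b" "v < b" "v' < b"
  shows "c * b * b + u * b + v < c' * b * b + u' * b + v' \<longleftrightarrow>
         (c < c' \<or> (c = c' \<and> (u < u' \<or> (u = u' \<and> v < v'))))"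
proof -
  have k1: "u * b + v < b * b"
  proof -
    have "u * b + v < u * b + b" using assms by simp
    also have "\<dots> = (u + 1) * b" by simp
    also have "\<dots> \<le> b * b" using assms by (intro mult_right_mono) auto
    finally show ?thesis .
  qed
  have k2: "u' * b + v' < b * b"
  proof -
    have "u' * b + v' < u' * b + b" using assms by simp
    also have "\<dots> = (u' + 1) * b" by simp
    also have "\<dots> \<le> b * b" using assms by (intro mult_right_mono) auto
    finally show ?thesis .
  qed
  have l1: "v < b \<Longrightarrow> u < u' \<Longrightarrow> u * b + v < u' * b + v'" for v v'
  proof -
    assume "v < b" "u < u'"
    then have "u * b + v < (u + 1) * b" by simp
    also have "\<dots> \<le> u' * b" using \<open>u < u'\<close> by (intro mult_right_mono) auto
    finally show ?thesis by simp
  qed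
  have l2: "c < c' \<Longrightarrow> c * b * b + (u * b + v) < c' * b * b + (u' * b + v')"
  proof -
    assume "c < c'"
    have "c * b * b + (u * b + v) < (c + 1) * (b * b)" using k1 by (simp add: algebra_simps)
    also have "\<dots> \<le> c' * (b * b)" using \<open>c < c'\<close> by (intro mult_right_mono) auto
    finally show ?thesis by (simp add: algebra_simps)
  qed
  have A: "u * b + v < u' * b + v' \<longleftrightarrow> (u < u' \<or> (u = u' \<and> v < v'))"
  proof (cases u u' rule: linorder_cases)
    case less then show ?thesis using l1[of v v'] assms by auto
  next
    case equal then show ?thesis by simp
  next
    case greater
    have "u' * b + v' < u * b + v"
    proof -
      have "u' * b + v' < (u' + 1) * b" using assms by simp
      also have "\<dots> \<le> u * b" using greater by (intro mult_right_mono) auto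
      finally show ?thesis by simp
    qed
    then show ?thesis using greater by auto
  qed
  show ?thesis
  proof (cases c c' rule: linorder_cases)
    case less
    then show ?thesis using l2 by (simp add: add.assoc)
  next
    case equal
    then show ?thesis using A by simp
  next
    case greater
    have "c' * b * b + (u' * b + v') < c * b * b + (u * b + v)"
    proof -
      have "c' * b * b + (u' * b + v') < (c' + 1) * (b * b)" using k2 by (simp add: algebra_simps)
      also have "\<dots> \<le> c * (b * b)" using greater by (intro mult_right_mono) auto
      finally show ?thesis by (simp add: algebra_simps)
    qed
    then show ?thesis using greater by (simp add: add.assoc)
  qed
qed

definition cls :: "'h option \<times> 'h option \<Rightarrow> nat" where
  "cls p = (if fst p \<noteq> None \<and> snd p \<noteq> None then 0 else 1)"

lemma ckey_eq: "ckey a b p = (if fst p \<noteq> None \<and> snd p \<noteq> None then 0 else 1) * B * B + okey a (fst p) * B + okey b (snd p)"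
  unfolding ckey_def by simp

lemma ckey_inj: "inj_on (ckey a b) (Hbar H \<times> Hbar H)"
proof (rule inj_onI)
  fix p q assume p: "p \<in> Hbar H \<times> Hbar H" and q: "q \<in> Hbar H \<times> Hbar H" and e: "ckey a b p = ckey a b q"
  have bd: "okey a (fst p) < B" "okey a (fst q) < B" "okey b (snd p) < B" "okey b (snd q) < B"
    using p q okey_bound by auto
  have "okey a (fst p) = okey a (fst q) \<and> okey b (snd p) = okey b (snd q)"
    using e arith3[OF bd(1,2,3,4)] unfolding ckey_def by blast
  then have "fst p = fst q" "snd p = snd q" using okey_inj p q unfolding inj_on_def by auto
  then show "p = q" by (simp add: prod_eq_iff)
qed

lemma ckey_cmp:
  assumes "p \<in> Hbar H \<times> Hbar H" "q \<in> Hbar H \<times> Hbar H"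
  shows "ckey a b p < ckey a b q \<longleftrightarrow>
    (cls p < cls q \<or> (cls p = cls q \<and>
      (okey a (fst p) < okey a (fst q) \<or> (okey a (fst p) = okey a (fst q) \<and> okey b (snd p) < okey b (snd q)))))"
  unfolding ckey_def cls_def[symmetric] by (rule lexcmp) (use assms okey_bound in auto)

lemma okey_None: "okey d None = card H + 2" unfolding okey_def by simp
lemma okey_Some: "okey d (Some h) = rk d h" unfolding okey_def by simp

lemma ckey_SS: "x \<in> H \<Longrightarrow> y \<in> H \<Longrightarrow> ckey a b (Some x, Some y) = rk a x * B + rk b y"
  unfolding ckey_def okey_def by simp

lemma ckey_SS_less:
  assumes "x \<in> H" "y \<in> H" "x' \<in> H" "y' \<in> H"
  shows "ckey a b (Some x, Some y) < ckey a b (Some x', Some y') \<longleftrightarrow>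
         (rk a x < rk a x' \<or> (rk a x = rk a x' \<and> rk b y < rk b y'))"
  using ckey_cmp[of "(Some x, Some y)" "(Some x', Some y')" a b] assms unfolding Hbar_def okey_def cls_def by auto

lemma cpkey_other: "c \<noteq> (f, m) \<Longrightarrow> cpkey c = ckey (fst c) (snd c)" unfolding cpkey_def by simp
lemma cpkey_fm: "cpkey (f, m) = skey" unfolding cpkey_def by simp

lemma skey_inj: "inj_on skey (Hbar H \<times> Hbar H)"
proof (rule inj_onI)
  fix p q assume p: "p \<in> Hbar H \<times> Hbar H" and q: "q \<in> Hbar H \<times> Hbar H" and e: "skey p = skey q"
  show "p = q" using e ckey_inj[of f m] p q unfolding skey_def inj_on_def
    by (auto split: if_splits)
qed

lemma cpkey_inj: "inj_on (cpkey c) (Hbar H \<times> Hbar H)"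
  unfolding cpkey_def using skey_inj ckey_inj by auto

lemma Pc_pref: "pref_on (Hbar H \<times> Hbar H) (Pc c)"
  unfolding Pc_def by (rule pref_on_key[OF cpkey_inj])

lemma ckey_class:
  assumes p: "p \<in> Some ` H \<times> Some ` H" and q: "q \<in> (Hbar H \<times> Hbar H) - (Some ` H \<times> Some ` H)"
  shows "ckey a b p < ckey a b q"
proof -
  have pq: "p \<in> Hbar H \<times> Hbar H" "q \<in> Hbar H \<times> Hbar H" using p q unfolding Hbar_def by auto
  have "cls p = 0" using p unfolding cls_def by auto
  moreover have "cls q = 1" using q unfolding Hbar_def cls_def by auto
  ultimately show ?thesis using ckey_cmp[OF pq, of a b] by simp
qed

lemma Pc_couple_pref: "couple_pref H (Pc c)"
  unfolding couple_pref_def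
proof
  show "pref_on (Hbar H \<times> Hbar H) (Pc c)" by (rule Pc_pref)
  show "\<forall>a\<in>Some ` H \<times> Some ` H. \<forall>b\<in>Hbar H \<times> Hbar H - Some ` H \<times> Some ` H. (a, b) \<in> Pc c"
  proof (intro ballI)
    fix p q assume p: "p \<in> Some ` H \<times> Some ` H" and q: "q \<in> Hbar H \<times> Hbar H - Some ` H \<times> Some ` H"
    have pq: "p \<in> Hbar H \<times> Hbar H" "q \<in> Hbar H \<times> Hbar H" using p q unfolding Hbar_def by auto
    have lt: "ckey a b p < ckey a b q" for a b using ckey_class[OF p q] .
    have "q \<noteq> (Some h1, Some h1)" "q \<noteq> (Some h2, Some h2)" using q h12 unfolding Hbar_def by auto
    then have "cpkey c p < cpkey c q" unfolding cpkey_def skey_def using lt by auto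
    then show "(p, q) \<in> Pc c" unfolding Pc_def using pq by auto
  qed
qed

definition Rbase :: "'d \<Rightarrow> 'd \<Rightarrow> ('h option \<times> 'h option) rel" where
  "Rbase a b = {(p, q). p \<in> Hbar H \<times> Hbar H \<and> q \<in> Hbar H \<times> Hbar H \<and> ckey a b p < ckey a b q}"

lemma okey_SomeNone: "x \<in> Hbar H \<Longrightarrow> x \<noteq> None \<Longrightarrow> okey d x < okey d None"
  unfolding okey_def Hbar_def using rk_bound by auto

lemma Rbase_resp: "responsive_couple H (Pd a) (Pd b) (Rbase a b)"
  unfolding responsive_couple_def
proof (intro ballI conjI)
  fix h x y assume h: "h \<in> Hbar H" and x: "x \<in> Hbar H" and y: "y \<in> Hbar H"
  have c1: "ckey a b (h, x) < ckey a b (h, y) \<longleftrightarrow> okey b x < okey b y"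
    using ckey_cmp[of "(h,x)" "(h,y)" a b] h x y okey_SomeNone[of x b] okey_SomeNone[of y b]
    unfolding cls_def by (cases h; cases x; cases y) auto
  show "((h, x), h, y) \<in> Rbase a b \<longleftrightarrow> (x, y) \<in> Pd b"
    unfolding Rbase_def Pd_def using c1 h x y by auto
  have c2: "ckey a b (x, h) < ckey a b (y, h) \<longleftrightarrow> okey a x < okey a y"
    using ckey_cmp[of "(x,h)" "(y,h)" a b] h x y okey_SomeNone[of x a] okey_SomeNone[of y a]
    unfolding cls_def by (cases h; cases x; cases y) auto
  show "((x, h), y, h) \<in> Rbase a b \<longleftrightarrow> (x, y) \<in> Pd a"
    unfolding Rbase_def Pd_def using c2 h x y by auto
qed

lemma Rbase_pref: "pref_on (Hbar H \<times> Hbar H) (Rbase a b)"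
  unfolding Rbase_def by (rule pref_on_key[OF ckey_inj])

lemma Pc_other: "c \<noteq> (f, m) \<Longrightarrow> Pc c = Rbase (fst c) (snd c)"
  unfolding Pc_def Rbase_def cpkey_def by simp

lemma fmG: "f \<in> G" "m \<in> G" "g1 \<in> G" "g2 \<in> G" by auto

lemma skey_lift:
  assumes h: "h \<in> H" and x: "x \<in> Hbar H \<times> Hbar H" and lt: "ckey f m (Some h, Some h) < ckey f m x"
  shows "skey (Some h, Some h) < skey x"
proof -
  have x1: "ckey f m (Some h1, Some h1) = 0" using ckey_SS[OF h12(1) h12(1)] rk_G1 by simp
  have x2: "ckey f m (Some h2, Some h2) = B + 1" using ckey_SS[OF h12(2) h12(2)] rk_G2 by simp
  show ?thesis
  proof (cases "h = h1")
    case True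
    then show ?thesis using lt x1 unfolding skey_def by auto
  next
    case False
    note n1 = False
    show ?thesis
    proof (cases "h = h2")
      case True
      then have "x \<noteq> (Some h1, Some h1)" using lt x1 x2 by auto
      moreover have "x \<noteq> (Some h2, Some h2)" using lt True by auto
      ultimately show ?thesis using True n1 h12 unfolding skey_def by auto
    next
      case False
      have "2 \<le> rk f h" "2 \<le> rk m h" using rk_G3 n1 False by auto
      then have "2 * B \<le> rk f h * B" by (intro mult_right_mono) auto
      then have big: "2 * B \<le> ckey f m (Some h, Some h)" using ckey_SS[OF h h] by simp
      then have "x \<noteq> (Some h1, Some h1)" "x \<noteq> (Some h2, Some h2)" using lt x1 x2 by auto
      then show ?thesis using n1 False lt unfolding skey_def by auto
    qed
  qed
qed

lemma Pc_RVT: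
  assumes c: "(a, b) \<in> C"
  shows "RVT H (Pd a) (Pd b) (Pc (a, b))"
proof (cases "(a, b) = (f, m)")
  case False
  then have e: "Pc (a, b) = Rbase a b" using Pc_other by simp
  show ?thesis unfolding RVT_def e using Rbase_pref Rbase_resp by blast
next
  case True
  then have ab: "a = f" "b = m" by auto
  show ?thesis unfolding RVT_def ab
  proof (intro exI conjI)
    show "pref_on (Hbar H \<times> Hbar H) (Rbase f m)" by (rule Rbase_pref)
    show "responsive_couple H (Pd f) (Pd m) (Rbase f m)" by (rule Rbase_resp)
    show "\<forall>h\<in>H. \<forall>x\<in>Hbar H \<times> Hbar H. ((Some h, Some h), x) \<in> Rbase f m \<longrightarrow> ((Some h, Some h), x) \<in> Pc (f, m)"
      unfolding Rbase_def Pc_def cpkey_fm using skey_lift by auto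
    show "\<forall>h\<in>Hbar H. \<forall>h'\<in>Hbar H. \<forall>h1a\<in>Hbar H. \<forall>h2a\<in>Hbar H. h \<noteq> h' \<longrightarrow> h1a \<noteq> h2a \<longrightarrow>
        (((h, h'), h1a, h2a) \<in> Rbase f m) = (((h, h'), h1a, h2a) \<in> Pc (f, m))"
      unfolding Rbase_def Pc_def cpkey_fm skey_def by auto
  qed
qed

lemma Ph_CPI: assumes h: "h \<in> H" shows "hosp_pref_CPI D (\<kappa> h) P0 (Ph h)"
  unfolding hosp_pref_CPI_def
proof (intro conjI)
  have inj: "inj_on (sig w) (feasible_sets D (\<kappa> h))"
    using sig_inj[OF finD w_inj] unfolding feasible_sets_def by (rule inj_on_subset) auto
  show "pref_on (feasible_sets D (\<kappa> h)) (Ph h)"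
    unfolding Ph_def lexP_def by (rule pref_on_key_rev[OF inj])
  show "indiv_hosp_pref D P0" by (rule P0)
  have k1: "1 \<le> \<kappa> h" using kappa2[OF h] by simp
  have Pnone: "d \<in> D \<Longrightarrow> (Some d, None) \<in> P0" for d using P0 unfolding indiv_hosp_pref_def by auto
  have Pasym: "(x, y) \<in> P0 \<Longrightarrow> (y, x) \<notin> P0" for x y
    using rk0.P0_trans rk0.P0_irrefl unfolding trans_def irrefl_def by blast
  have Pirr: "(x, x) \<notin> P0" for x using rk0.P0_irrefl unfolding irrefl_def by blast
  show "responsive_hosp D (\<kappa> h) P0 (Ph h)"
    unfolding responsive_hosp_def
  proof (intro conjI ballI allI impI)
    fix x y assume x: "x \<in> insert None (Some ` D)" and y: "y \<in> insert None (Some ` D)"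
    have fx: "opt_set x \<in> feasible_sets D (\<kappa> h)" "opt_set y \<in> feasible_sets D (\<kappa> h)"
      using x y k1 unfolding feasible_sets_def opt_set_def by auto
    show "((opt_set x, opt_set y) \<in> Ph h) = ((x, y) \<in> P0)"
    proof (cases x; cases y)
      fix d e assume xd: "x = Some d" and ye: "y = Some e"
      have "d \<in> D" "e \<in> D" using x y xd ye by auto
      then show ?thesis using fx xd ye w_iff[of d e] unfolding Ph_def lexP_def opt_set_def sig_def by auto
    next
      fix d assume xd: "x = Some d" and ye: "y = None"
      have "d \<in> D" using x xd by auto
      then show ?thesis using fx xd ye Pnone unfolding Ph_def lexP_def opt_set_def sig_def by auto
    next
      fix e assume xd: "x = None" and ye: "y = Some e"
      have "e \<in> D" using y ye by auto
      then show ?thesis using fx xd ye Pnone Pasym unfolding Ph_def lexP_def opt_set_def sig_def by auto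
    next
      assume "x = None" "y = None"
      then show ?thesis using Pirr unfolding Ph_def lexP_def opt_set_def sig_def by auto
    qed
  next
    fix D' D1 D2 assume D': "D' \<subset> D" and D1: "D1 \<subseteq> D - D'" and D2: "D2 \<subseteq> D - D'"
      and c1: "card (D' \<union> D1) \<le> \<kappa> h" and c2: "card (D' \<union> D2) \<le> \<kappa> h"
    have fin: "finite D'" "finite D1" "finite D2"
      using finite_subset[OF _ finD, of D'] finite_subset[OF _ finD, of D1] finite_subset[OF _ finD, of D2]
        D' D1 D2 by auto
    have s1: "sig w (D' \<union> D1) = sig w D' + sig w D1" unfolding sig_def
      using fin D1 by (intro sum.union_disjoint) auto
    have s2: "sig w (D' \<union> D2) = sig w D' + sig w D2" unfolding sig_def
      using fin D2 by (intro sum.union_disjoint) auto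
    have cc1: "card D1 \<le> \<kappa> h" using c1 card_mono[of "D' \<union> D1" D1] fin by auto
    have cc2: "card D2 \<le> \<kappa> h" using c2 card_mono[of "D' \<union> D2" D2] fin by auto
    show "((D' \<union> D1, D' \<union> D2) \<in> Ph h) = ((D1, D2) \<in> Ph h)"
      unfolding Ph_def lexP_def feasible_sets_def using s1 s2 D' D1 D2 c1 c2 cc1 cc2 by auto
  qed
qed

end


context construction begin

abbreviation "A \<mu> h \<equiv> assigned D \<mu> h"

lemma A_sub: "A \<mu> h \<subseteq> D" unfolding assigned_def by auto
lemma A_fin: "finite (A \<mu> h)" using finite_subset[OF A_sub finD] .
lemma A_mem: "d \<in> A \<mu> h \<longleftrightarrow> d \<in> D \<and> \<mu> d = Some h" unfolding assigned_def by auto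

lemma int_gen:
  assumes cA: "card (A \<mu> h) \<le> \<kappa> h" and D2: "D'' \<subseteq> A \<mu> h" and D1: "D' \<subseteq> D"
    and cN: "card ((A \<mu> h - D'') \<union> D') \<le> \<kappa> h"
    and x: "x \<in> D'" "x \<notin> A \<mu> h"
    and below: "\<forall>y\<in>A \<mu> h - ((A \<mu> h - D'') \<union> D'). w y < w x"
  shows "interested \<kappa> D Ph \<mu> h D'"
  by (rule interested_I[of Ph h D w \<kappa> \<mu> D'' D' x]) (use assms finD w_inj in \<open>auto simp: Ph_def\<close>)

lemma int_add1:
  assumes "card (A \<mu> h) < \<kappa> h" "d \<in> D" "d \<notin> A \<mu> h"
  shows "interested \<kappa> D Ph \<mu> h {d}"
proof (rule int_gen[of \<mu> h "{}" "{d}" d])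
  have "card (insert d (A \<mu> h)) = Suc (card (A \<mu> h))" using A_fin[of \<mu> h] assms by simp
  then show "card (A \<mu> h - {} \<union> {d}) \<le> \<kappa> h" using assms by simp
qed (use assms in auto)

lemma int_swap1:
  assumes "card (A \<mu> h) \<le> \<kappa> h" "d \<in> D" "d \<notin> A \<mu> h" "e \<in> A \<mu> h" "w e < w d"
  shows "interested \<kappa> D Ph \<mu> h {d}"
proof (rule int_gen[of \<mu> h "{e}" "{d}" d])
  have c1: "card (A \<mu> h - {e}) = card (A \<mu> h) - 1" using assms A_fin[of \<mu> h] by simp
  have "card (A \<mu> h) > 0" using assms A_fin[of \<mu> h] card_gt_0_iff by blast
  moreover have "card (insert d (A \<mu> h - {e})) = Suc (card (A \<mu> h - {e}))"
    using A_fin[of \<mu> h] assms by simp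
  ultimately show "card (A \<mu> h - {e} \<union> {d}) \<le> \<kappa> h" using assms c1 by simp
qed (use assms in auto)

lemma int_add2:
  assumes "card (A \<mu> h) + 2 \<le> \<kappa> h" "a \<in> D" "b \<in> D" "a \<notin> A \<mu> h" "b \<notin> A \<mu> h" "a \<noteq> b"
  shows "interested \<kappa> D Ph \<mu> h {a, b}"
proof (rule int_gen[of \<mu> h "{}" "{a, b}" a])
  have "card (insert a (insert b (A \<mu> h))) = Suc (Suc (card (A \<mu> h)))" using A_fin[of \<mu> h] assms by simp
  then show "card (A \<mu> h - {} \<union> {a, b}) \<le> \<kappa> h" using assms by simp
qed (use assms in auto)

lemma int_add2':
  assumes "card (A \<mu> h) < \<kappa> h" "a \<in> D" "a \<notin> A \<mu> h" "b \<in> A \<mu> h"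
  shows "interested \<kappa> D Ph \<mu> h {a, b}"
proof (rule int_gen[of \<mu> h "{}" "{a, b}" a])
  have "A \<mu> h - {} \<union> {a, b} = insert a (A \<mu> h)" using assms by auto
  moreover have "card (insert a (A \<mu> h)) = Suc (card (A \<mu> h))" using A_fin[of \<mu> h] assms by simp
  ultimately show "card (A \<mu> h - {} \<union> {a, b}) \<le> \<kappa> h" using assms by simp
qed (use assms A_sub[of \<mu> h] in auto)

lemma int_swap2a:
  assumes "card (A \<mu> h) \<le> \<kappa> h" "a \<in> D" "a \<notin> A \<mu> h" "b \<in> A \<mu> h" "e \<in> A \<mu> h" "e \<noteq> b" "w e < w a"
  shows "interested \<kappa> D Ph \<mu> h {a, b}"
proof (rule int_gen[of \<mu> h "{e}" "{a, b}" a])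
  have eq: "A \<mu> h - {e} \<union> {a, b} = insert a (A \<mu> h - {e})" using assms by auto
  have c1: "card (A \<mu> h - {e}) = card (A \<mu> h) - 1" using assms A_fin[of \<mu> h] by simp
  have "card (A \<mu> h) > 0" using assms A_fin[of \<mu> h] card_gt_0_iff by blast
  moreover have "card (insert a (A \<mu> h - {e})) = Suc (card (A \<mu> h - {e}))"
    using A_fin[of \<mu> h] assms by simp
  ultimately show "card (A \<mu> h - {e} \<union> {a, b}) \<le> \<kappa> h" unfolding eq using assms c1 by simp
  show "{a, b} \<subseteq> D" using assms A_sub[of \<mu> h] by auto
  show "\<forall>y\<in>A \<mu> h - (A \<mu> h - {e} \<union> {a, b}). w y < w a" using assms by auto
qed (use assms in auto)

lemma int_swap2b:
  assumes "card (A \<mu> h) \<le> \<kappa> h" "a \<in> D" "b \<in> D" "a \<notin> A \<mu> h" "b \<notin> A \<mu> h" "a \<noteq> b"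
    "u \<in> A \<mu> h" "v \<in> A \<mu> h" "u \<noteq> v" "w u < w a" "w v < w a"
  shows "interested \<kappa> D Ph \<mu> h {a, b}"
proof (rule int_gen[of \<mu> h "{u, v}" "{a, b}" a])
  have eq: "A \<mu> h - {u, v} \<union> {a, b} = insert a (insert b (A \<mu> h - {u, v}))" using assms by auto
  have "card (A \<mu> h - {u, v}) = card (A \<mu> h) - card {u, v}" using assms A_fin[of \<mu> h]
    by (intro card_Diff_subset) auto
  then have "card (A \<mu> h - {u, v}) = card (A \<mu> h) - 2" using assms by simp
  moreover have "card (A \<mu> h) \<ge> 2"
  proof -
    have "{u, v} \<subseteq> A \<mu> h" using assms by auto
    then have "card {u, v} \<le> card (A \<mu> h)" by (rule card_mono[OF A_fin])
    then show ?thesis using assms by simp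
  qed
  moreover have "card (insert a (insert b (A \<mu> h - {u, v}))) = Suc (Suc (card (A \<mu> h - {u, v})))"
    using A_fin[of \<mu> h] assms by simp
  ultimately show "card (A \<mu> h - {u, v} \<union> {a, b}) \<le> \<kappa> h" unfolding eq using assms by simp
  show "\<forall>y\<in>A \<mu> h - (A \<mu> h - {u, v} \<union> {a, b}). w y < w a" using assms by auto
qed (use assms in auto)

abbreviation "stab \<mu> \<equiv> stable H \<kappa> S C Pd Pc Ph \<mu>"

lemma stab_match: "stab \<mu> \<Longrightarrow> is_matching H \<kappa> D \<mu>" unfolding stable_def by auto

lemma single_block:
  assumes "stab \<mu>" "s \<in> S" "h \<in> H" "(Some h, \<mu> s) \<in> Pd s" "interested \<kappa> D Ph \<mu> h {s}"
  shows False
  using assms unfolding stable_def blocks_single_def by auto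

lemma couple_block:
  assumes "stab \<mu>" "c \<in> C" "hf \<in> H" "hm \<in> H" "blocks_couple \<kappa> D Pc Ph \<mu> hf hm c"
  shows False
  using assms unfolding stable_def by auto

lemma Pc_H2:
  assumes "hf \<in> H" "hm \<in> H" "q \<in> Hbar H \<times> Hbar H" "fst q = None \<or> snd q = None"
  shows "((Some hf, Some hm), q) \<in> Pc c"
  using Pc_couple_pref[of c] assms unfolding couple_pref_def Hbar_def by auto

lemma sum_ge2:
  fixes g :: "'h \<Rightarrow> nat"
  assumes "finite X" "2 \<le> sum g X"
  shows "(\<exists>h\<in>X. 2 \<le> g h) \<or> (\<exists>h\<in>X. \<exists>h'\<in>X. h \<noteq> h' \<and> 1 \<le> g h \<and> 1 \<le> g h')"
proof (rule ccontr)
  assume n: "\<not> ?thesis"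
  then have nA: "\<not> (\<exists>h\<in>X. 2 \<le> g h)" and nB: "\<not> (\<exists>h\<in>X. \<exists>h'\<in>X. h \<noteq> h' \<and> 1 \<le> g h \<and> 1 \<le> g h')"
    by blast+
  have le1: "\<forall>h\<in>X. g h \<le> 1"
  proof
    fix h assume "h \<in> X"
    then have "\<not> 2 \<le> g h" using nA by blast
    then show "g h \<le> 1" by simp
  qed
  let ?P = "{h\<in>X. 1 \<le> g h}"
  have fP: "finite ?P" using assms by simp
  have "\<forall>a\<in>?P. \<forall>b\<in>?P. a = b" using nB by blast
  then have cP: "card ?P \<le> Suc 0" using card_le_Suc0_iff_eq[OF fP] by blast
  have s1: "sum g X = sum g (X - ?P) + sum g ?P" using assms(1)
    by (intro sum.subset_diff) auto
  have z: "\<forall>x\<in>X - ?P. g x = 0" by auto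
  have s2: "sum g (X - ?P) = 0" using sum.neutral[OF z] .
  have s3: "sum g ?P \<le> sum (\<lambda>_. 1) ?P" using le1 by (intro sum_mono) auto
  have "sum g X \<le> card ?P" using s1 s2 s3 by simp
  then show False using cP assms by simp
qed

lemma full:
  assumes st: "stab \<mu>"
  shows "\<forall>d\<in>D. \<exists>h\<in>H. \<mu> d = Some h" and "\<forall>h\<in>H. card (A \<mu> h) = \<kappa> h"
proof -
  have mt: "is_matching H \<kappa> D \<mu>" using stab_match[OF st] .
  have inH: "\<forall>d\<in>D. \<mu> d \<in> Hbar H" and capA: "\<forall>h\<in>H. card (A \<mu> h) \<le> \<kappa> h"
    using mt unfolding is_matching_def by auto
  let ?M = "{d\<in>D. \<mu> d \<noteq> None}"
  have Munion: "?M = (\<Union>h\<in>H. A \<mu> h)"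
    using inH unfolding assigned_def Hbar_def by auto
  have cM: "card ?M = (\<Sum>h\<in>H. card (A \<mu> h))"
    unfolding Munion by (rule card_UN_disjoint) (use finH A_fin in \<open>auto simp: assigned_def\<close>)
  have free: "(\<Sum>h\<in>H. \<kappa> h - card (A \<mu> h)) = card D - card ?M"
    using sum_subtractf_nat[of H "\<lambda>h. card (A \<mu> h)" \<kappa>] capA sumk cM by simp
  have cMD: "card ?M \<le> card D" using finD by (intro card_mono) auto
  show all: "\<forall>d\<in>D. \<exists>h\<in>H. \<mu> d = Some h"
  proof (rule ccontr)
    assume "\<not> ?thesis"
    then obtain u where u: "u \<in> D" "\<mu> u = None" using inH unfolding Hbar_def by auto
    have "?M \<subseteq> D - {u}" using u by auto
    then have "card ?M \<le> card (D - {u})" using finD by (intro card_mono) auto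
    moreover have "card (D - {u}) = card D - 1" using u by simp
    moreover have "card D > 0" using u finD card_gt_0_iff by blast
    ultimately have f1: "1 \<le> (\<Sum>h\<in>H. \<kappa> h - card (A \<mu> h))" using free by linarith
    have "\<exists>h\<in>H. card (A \<mu> h) < \<kappa> h"
    proof (rule ccontr)
      assume "\<not> ?thesis"
      then have "\<forall>h\<in>H. \<kappa> h - card (A \<mu> h) = 0" by auto
      then have "(\<Sum>h\<in>H. \<kappa> h - card (A \<mu> h)) = 0" by simp
      then show False using f1 by simp
    qed
    then obtain h where h: "h \<in> H" "card (A \<mu> h) < \<kappa> h" by blast
    have uA: "u \<notin> A \<mu> h'" for h' using u unfolding assigned_def by auto
    show False
    proof (cases "u \<in> S")
      case True
      assume "u \<in> S"
      moreover have "(Some h, \<mu> u) \<in> Pd u" using Pd_pref[of u] h u unfolding doctor_pref_def by auto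
      moreover have "interested \<kappa> D Ph \<mu> h {u}" using int_add1[OF h(2) u(1) uA] .
      ultimately show False using single_block[OF st _ h(1)] by blast
    next
      case False
      then obtain p where c: "(u, p) \<in> C \<or> (p, u) \<in> C" using D_cases[OF u(1)] by blast
      then have pD: "p \<in> D" using C_D by blast
      have up: "u \<noteq> p" using c C_w by auto
      show False
      proof (cases "\<mu> p")
        case None
        have "?M \<subseteq> D - {u, p}" using u None by auto
        then have "card ?M \<le> card (D - {u, p})" using finD by (intro card_mono) auto
        moreover have "card (D - {u, p}) = card D - 2" using u pD up finD by (simp add: card_Diff_subset)
        moreover have "card D \<ge> 2"
        proof -
          have "card {u, p} \<le> card D" using u pD finD by (intro card_mono) auto
          then show ?thesis using up by simp
        qed
        ultimately have f2: "2 \<le> (\<Sum>h\<in>H. \<kappa> h - card (A \<mu> h))" using free by linarith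
        have pA: "p \<notin> A \<mu> h'" for h' using None unfolding assigned_def by auto
        from sum_ge2[OF finH f2] show False
        proof (elim disjE bexE conjE)
          fix h assume h: "h \<in> H" "2 \<le> \<kappa> h - card (A \<mu> h)"
          then have hc: "card (A \<mu> h) + 2 \<le> \<kappa> h" by simp
          have i: "interested \<kappa> D Ph \<mu> h {u, p}" "interested \<kappa> D Ph \<mu> h {p, u}"
            using int_add2[OF hc u(1) pD uA pA up] by (auto simp: insert_commute)
          have pr: "((Some h, Some h), (\<mu> a, \<mu> b)) \<in> Pc (a, b)" if "\<mu> a = None" "\<mu> b = None" for a b
            using that h(1) by (intro Pc_H2) (auto simp: Hbar_def)
          from c show False
          proof
            assume c1: "(u, p) \<in> C"
            have "blocks_couple \<kappa> D Pc Ph \<mu> h h (u, p)"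
              unfolding blocks_couple_def using pr[of u p] i u None by simp
            then show False using couple_block[OF st c1 h(1) h(1)] by blast
          next
            assume c1: "(p, u) \<in> C"
            have "blocks_couple \<kappa> D Pc Ph \<mu> h h (p, u)"
              unfolding blocks_couple_def using pr[of p u] i u None by (simp add: insert_commute)
            then show False using couple_block[OF st c1 h(1) h(1)] by blast
          qed
        next
          fix h h' assume h: "h \<in> H" "h' \<in> H" "h \<noteq> h'" "1 \<le> \<kappa> h - card (A \<mu> h)" "1 \<le> \<kappa> h' - card (A \<mu> h')"
          have i1: "interested \<kappa> D Ph \<mu> h {d}" if "d \<in> D" "\<mu> d = None" for d
            using int_add1[of \<mu> h d] h that unfolding assigned_def by auto
          have i2: "interested \<kappa> D Ph \<mu> h' {d}" if "d \<in> D" "\<mu> d = None" for d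
            using int_add1[of \<mu> h' d] h that unfolding assigned_def by auto
          have pr: "((Some h, Some h'), (\<mu> a, \<mu> b)) \<in> Pc (a, b)" if "\<mu> a = None" "\<mu> b = None" for a b
            using that h by (intro Pc_H2) (auto simp: Hbar_def)
          from c show False
          proof
            assume c1: "(u, p) \<in> C"
            have "blocks_couple \<kappa> D Pc Ph \<mu> h h' (u, p)"
              unfolding blocks_couple_def using pr[of u p] i1[OF u] i2[OF pD None] h(3) u None by simp
            then show False using couple_block[OF st c1 h(1) h(2)] by blast
          next
            assume c1: "(p, u) \<in> C"
            have "blocks_couple \<kappa> D Pc Ph \<mu> h h' (p, u)"
              unfolding blocks_couple_def using pr[of p u] i1[OF pD None] i2[OF u] h(3) u None by simp
            then show False using couple_block[OF st c1 h(1) h(2)] by blast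
          qed
        qed
      next
        case (Some hp)
        have hp: "hp \<in> H" using inH pD Some unfolding Hbar_def by auto
        have pA: "p \<in> A \<mu> hp" using Some pD unfolding assigned_def by auto
        show False
        proof (cases "h = hp")
          case True
          have i: "interested \<kappa> D Ph \<mu> h {u, p}" using int_add2'[OF h(2) u(1) uA] pA True by simp
          from c show False
          proof
            assume c1: "(u, p) \<in> C"
            have pr: "((Some h, Some h), (\<mu> u, \<mu> p)) \<in> Pc (u, p)"
              using u Some h(1) hp by (intro Pc_H2) (auto simp: Hbar_def)
            have "blocks_couple \<kappa> D Pc Ph \<mu> h h (u, p)"
              unfolding blocks_couple_def using pr i by simp
            then show False using couple_block[OF st c1 h(1) h(1)] by blast
          next
            assume c1: "(p, u) \<in> C"
            have pr: "((Some h, Some h), (\<mu> p, \<mu> u)) \<in> Pc (p, u)"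
              using u Some h(1) hp by (intro Pc_H2) (auto simp: Hbar_def)
            have "blocks_couple \<kappa> D Pc Ph \<mu> h h (p, u)"
              unfolding blocks_couple_def using pr i by (simp add: insert_commute)
            then show False using couple_block[OF st c1 h(1) h(1)] by blast
          qed
        next
          case False
          have i: "interested \<kappa> D Ph \<mu> h {u}" using int_add1[OF h(2) u(1) uA] .
          from c show False
          proof
            assume c1: "(u, p) \<in> C"
            have pr: "((Some h, Some hp), (\<mu> u, \<mu> p)) \<in> Pc (u, p)"
              using u Some h(1) hp by (intro Pc_H2) (auto simp: Hbar_def)
            have "blocks_couple \<kappa> D Pc Ph \<mu> h hp (u, p)"
              unfolding blocks_couple_def using pr i False Some u by simp
            then show False using couple_block[OF st c1 h(1) hp] by blast
          next
            assume c1: "(p, u) \<in> C"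
            have pr: "((Some hp, Some h), (\<mu> p, \<mu> u)) \<in> Pc (p, u)"
              using u Some h(1) hp by (intro Pc_H2) (auto simp: Hbar_def)
            have "blocks_couple \<kappa> D Pc Ph \<mu> hp h (p, u)"
              unfolding blocks_couple_def using pr i False Some u by auto
            then show False using couple_block[OF st c1 hp h(1)] by blast
          qed
        qed
      qed
    qed
  qed
  then have "?M = D" by auto
  then have eqs: "(\<Sum>h\<in>H. card (A \<mu> h)) = (\<Sum>h\<in>H. \<kappa> h)" using cM sumk by simp
  show "\<forall>h\<in>H. card (A \<mu> h) = \<kappa> h"
  proof (rule ccontr)
    assume "\<not> ?thesis"
    then obtain h where "h \<in> H" "card (A \<mu> h) < \<kappa> h" using capA by force
    then have "(\<Sum>h\<in>H. card (A \<mu> h)) < (\<Sum>h\<in>H. \<kappa> h)"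
      using capA finH by (intro sum_strict_mono_ex1) auto
    then show False using eqs by simp
  qed
qed

end

context construction begin

lemma BC_fst:
  assumes "((Some hf, Some hm), (\<mu> a, \<mu> b)) \<in> Pc (a, b)" "\<mu> b = Some hm" "\<mu> a \<noteq> Some hf"
    "hf \<noteq> hm \<Longrightarrow> interested \<kappa> D Ph \<mu> hf {a}" "hf = hm \<Longrightarrow> interested \<kappa> D Ph \<mu> hf {a, b}"
  shows "blocks_couple \<kappa> D Pc Ph \<mu> hf hm (a, b)"
  using assms unfolding blocks_couple_def by auto

lemma BC_snd:
  assumes "((Some hf, Some hm), (\<mu> a, \<mu> b)) \<in> Pc (a, b)" "\<mu> a = Some hf" "\<mu> b \<noteq> Some hm"
    "hf \<noteq> hm \<Longrightarrow> interested \<kappa> D Ph \<mu> hm {b}" "hf = hm \<Longrightarrow> interested \<kappa> D Ph \<mu> hf {a, b}"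
  shows "blocks_couple \<kappa> D Pc Ph \<mu> hf hm (a, b)"
  using assms unfolding blocks_couple_def by auto

lemma BC_both:
  assumes "((Some hf, Some hm), (\<mu> a, \<mu> b)) \<in> Pc (a, b)" "hf \<noteq> hm" "\<mu> a \<noteq> Some hf" "\<mu> b \<noteq> Some hm"
    "interested \<kappa> D Ph \<mu> hf {a}" "interested \<kappa> D Ph \<mu> hm {b}"
  shows "blocks_couple \<kappa> D Pc Ph \<mu> hf hm (a, b)"
  using assms unfolding blocks_couple_def by auto

lemma BC_tog:
  assumes "((Some h, Some h), (\<mu> a, \<mu> b)) \<in> Pc (a, b)" "interested \<kappa> D Ph \<mu> h {a, b}"
  shows "blocks_couple \<kappa> D Pc Ph \<mu> h h (a, b)"
  using assms unfolding blocks_couple_def by auto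

definition partners :: "'d \<Rightarrow> 'd set" where
  "partners d = {p. (d, p) \<in> C \<or> (p, d) \<in> C}"

lemma partners_uniq: "p \<in> partners d \<Longrightarrow> q \<in> partners d \<Longrightarrow> p = q"
  unfolding partners_def using C_fst_uniq C_snd_uniq C_not_both by blast

lemma matched:
  assumes "stab \<mu>" "d \<in> D" obtains h where "h \<in> H" "\<mu> d = Some h"
  using full(1)[OF assms(1)] assms(2) by blast

lemma cardA: "stab \<mu> \<Longrightarrow> h \<in> H \<Longrightarrow> card (A \<mu> h) = \<kappa> h"
  using full(2) by blast

lemma Rbase_SS:
  assumes "x \<in> H" "y \<in> H" "x' \<in> H" "y' \<in> H" "rk a x < rk a x' \<or> (x = x' \<and> rk b y < rk b y')"
  shows "((Some x, Some y), (Some x', Some y')) \<in> Rbase a b"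
  unfolding Rbase_def using ckey_SS_less[OF assms(1-4), of a b] assms unfolding Hbar_def by auto

lemma move:
  assumes st: "stab \<mu>" and dD: "d \<in> D" and dnf: "d \<noteq> f" "d \<noteq> m" and h: "h \<in> H"
    and y: "\<mu> d = Some y" "y \<in> H" and pref: "rk d h < rk d y"
    and e: "e \<in> A \<mu> h" "w e < w d" and np: "e \<notin> partners d"
  shows False
proof -
  have yh: "y \<noteq> h" using pref by auto
  have dA: "d \<notin> A \<mu> h" using y yh unfolding assigned_def by auto
  have cA: "card (A \<mu> h) \<le> \<kappa> h" using cardA[OF st h] by simp
  show False
  proof (cases "d \<in> S")
    case True
    have "(Some h, \<mu> d) \<in> Pd d" using y Pd_Some[OF h y(2)] pref by simp
    moreover have "interested \<kappa> D Ph \<mu> h {d}" using int_swap1[OF cA dD dA e] .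
    ultimately show False using single_block[OF st True h] by blast
  next
    case False
    then obtain p where c: "(d, p) \<in> C \<or> (p, d) \<in> C" using D_cases[OF dD] by blast
    then have pD: "p \<in> D" using C_D by blast
    obtain hp where hp: "hp \<in> H" "\<mu> p = Some hp" using matched[OF st pD] by blast
    have pp: "p \<in> partners d" using c unfolding partners_def by auto
    from c show False
    proof
      assume c1: "(d, p) \<in> C"
      have ne: "(d, p) \<noteq> (f, m)" using dnf by auto
      have pr: "((Some h, Some hp), (\<mu> d, \<mu> p)) \<in> Pc (d, p)"
        unfolding Pc_other[OF ne] using y hp h pref by (auto intro!: Rbase_SS)
      have "blocks_couple \<kappa> D Pc Ph \<mu> h hp (d, p)"
      proof (rule BC_fst[OF pr hp(2)])
        show "\<mu> d \<noteq> Some h" using y yh by simp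
        show "interested \<kappa> D Ph \<mu> h {d}" if "h \<noteq> hp" using int_swap1[OF cA dD dA e] .
        show "interested \<kappa> D Ph \<mu> h {d, p}" if "h = hp"
          using int_swap2a[OF cA dD dA _ e(1) _ e(2), of p] that hp pD np pp unfolding assigned_def by auto
      qed
      then show False using couple_block[OF st c1 h hp(1)] by blast
    next
      assume c1: "(p, d) \<in> C"
      have ne: "(p, d) \<noteq> (f, m)" using dnf by auto
      have pr: "((Some hp, Some h), (\<mu> p, \<mu> d)) \<in> Pc (p, d)"
        unfolding Pc_other[OF ne] using y hp h pref by (auto intro!: Rbase_SS)
      have "blocks_couple \<kappa> D Pc Ph \<mu> hp h (p, d)"
      proof (rule BC_snd[OF pr hp(2)])
        show "\<mu> d \<noteq> Some h" using y yh by simp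
        show "interested \<kappa> D Ph \<mu> h {d}" if "hp \<noteq> h" using int_swap1[OF cA dD dA e] .
        show "interested \<kappa> D Ph \<mu> hp {p, d}" if "hp = h"
          using int_swap2a[OF cA dD dA _ e(1) _ e(2), of p] that hp pD np pp unfolding assigned_def
          by (auto simp: insert_commute)
      qed
      then show False using couple_block[OF st c1 hp(1) h] by blast
    qed
  qed
qed

lemma fallback:
  assumes st: "stab \<mu>" and c: "(d, p) \<in> C" and dnf: "d \<noteq> f" and h: "h \<in> H" and x: "x \<in> H" "h \<noteq> x"
    and y: "\<mu> d = Some y" "y \<in> H" and pref: "rk d h < rk d y" and ph: "\<mu> p = Some h"
    and e: "e \<in> A \<mu> h" "w e < w d" and q: "q \<in> A \<mu> x" "w q < w p"
  shows False
proof -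
  have dD: "d \<in> D" and pD: "p \<in> D" using C_D[OF c] by auto
  have yh: "y \<noteq> h" using pref by auto
  have dA: "d \<notin> A \<mu> h" using y yh unfolding assigned_def by auto
  have pA: "p \<notin> A \<mu> x" using ph x unfolding assigned_def by auto
  have ne: "(d, p) \<noteq> (f, m)" using dnf by auto
  have pr: "((Some h, Some x), (\<mu> d, \<mu> p)) \<in> Pc (d, p)"
    unfolding Pc_other[OF ne] using y ph h x pref by (auto intro!: Rbase_SS)
  have "blocks_couple \<kappa> D Pc Ph \<mu> h x (d, p)"
  proof (rule BC_both[OF pr x(2)])
    show "\<mu> d \<noteq> Some h" using y yh by simp
    show "\<mu> p \<noteq> Some x" using ph x by simp
    show "interested \<kappa> D Ph \<mu> h {d}" using int_swap1[OF _ dD dA e] cardA[OF st h] by simp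
    show "interested \<kappa> D Ph \<mu> x {p}" using int_swap1[OF _ pD pA q] cardA[OF st x(1)] by simp
  qed
  then show False using couple_block[OF st c h x(1)] by blast
qed

definition placed :: "('d \<Rightarrow> 'h option) \<Rightarrow> 'd \<Rightarrow> bool" where
  "placed \<mu> d = (if d \<in> G then \<mu> d = Some h1 \<or> \<mu> d = Some h2 else \<mu> d = Some (t d))"

lemma count_below:
  assumes Y: "Y \<subseteq> D" "finite Y" "card Y = k" and d: "d \<in> D" "d \<notin> Y"
    and Z: "{e \<in> Y. w d < w e} \<subseteq> Z" "finite Z" "card Z + j \<le> k"
  shows "j \<le> card {e \<in> Y. w e < w d}"
proof -
  have "Y = {e \<in> Y. w d < w e} \<union> {e \<in> Y. w e < w d}"
  proof (intro equalityI subsetI)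
    fix e assume "e \<in> Y"
    then have "e \<in> D" "e \<noteq> d" using Y d by auto
    then have "w e \<noteq> w d" using w_eq d by blast
    then show "e \<in> {e \<in> Y. w d < w e} \<union> {e \<in> Y. w e < w d}" using \<open>e \<in> Y\<close> by auto
  qed auto
  then have "k \<le> card {e \<in> Y. w d < w e} + card {e \<in> Y. w e < w d}"
    using card_Un_le Y(3) by metis
  moreover have "card {e \<in> Y. w d < w e} \<le> card Z" using Z card_mono by blast
  ultimately show ?thesis using Z by linarith
qed

lemma world_W:
  assumes st: "stab \<mu>" and d: "d \<in> world" and np: "\<not> placed \<mu> d"
    and L: "e0 \<in> A \<mu> (t d)" "w e0 < w d"
  shows False
proof -
  have dD: "d \<in> D" using d by auto
  have dG: "d \<notin> G" using d by auto
  let ?h = "t d"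
  have h: "?h \<in> H" using tH d by auto
  obtain y where y: "y \<in> H" "\<mu> d = Some y" using matched[OF st dD] by blast
  have yh: "y \<noteq> ?h" using np y dG unfolding placed_def by auto
  have pref: "rk d ?h < rk d y" using rk_top[of d] rk_pos[of y d] top_w[OF dG] yh by simp
  have dnf: "d \<noteq> f" "d \<noteq> m" using dG by auto
  show False
  proof (cases "\<exists>e\<in>A \<mu> ?h. w e < w d \<and> e \<notin> partners d")
    case True
    then obtain e where "e \<in> A \<mu> ?h" "w e < w d" "e \<notin> partners d" by blast
    then show False using move[OF st dD dnf h y(2,1) pref] by blast
  next
    case False
    then have p0: "e0 \<in> partners d" using L by blast
    then have "(d, e0) \<in> C \<or> (e0, d) \<in> C" unfolding partners_def by auto
    moreover have "(e0, d) \<notin> C" using C_w L(2) by fastforce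
    ultimately have c: "(d, e0) \<in> C" by blast
    have zD: "z \<in> D" using zD .
    obtain x where x: "x \<in> H" "\<mu> z = Some x" using matched[OF st zD] by blast
    have ze0: "z \<noteq> e0" using c zpart d by auto
    have e0D: "e0 \<in> D" using C_D c by auto
    have zlt: "w z < w e0" using zlow e0D ze0 w_eq[OF zD e0D] by fastforce
    have zd: "z \<noteq> d" using L zlow e0D by fastforce
    have xh: "x \<noteq> ?h"
    proof
      assume "x = ?h"
      then have zA: "z \<in> A \<mu> ?h" using x zD unfolding assigned_def by auto
      have "w z < w d" using zlow dD zd w_eq[OF zD dD] by fastforce
      then have "z \<in> partners d" using False zA by blast
      then show False using partners_uniq[OF _ p0] ze0 by blast
    qed
    have e0h: "\<mu> e0 = Some ?h" using L(1) unfolding assigned_def by auto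
    have zA: "z \<in> A \<mu> x" using x zD unfolding assigned_def by auto
    show False using fallback[OF st c dnf(1) h x(1) xh[symmetric] y(2,1) pref e0h L zA zlt] .
  qed
qed

end

context construction begin

lemma Hbar_SS: "x \<in> H \<Longrightarrow> y \<in> H \<Longrightarrow> (Some x, Some y) \<in> Hbar H \<times> Hbar H"
  unfolding Hbar_def by auto

lemma Pc_fm_top:
  assumes "p \<in> Hbar H \<times> Hbar H" "p \<noteq> (Some h1, Some h1)"
  shows "((Some h1, Some h1), p) \<in> Pc (f, m)"
  unfolding Pc_def cpkey_fm using assms h12 unfolding skey_def Hbar_def by auto

lemma Pc_fm_h2:
  assumes "p \<in> Hbar H \<times> Hbar H" "p \<noteq> (Some h1, Some h1)" "p \<noteq> (Some h2, Some h2)"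
  shows "((Some h2, Some h2), p) \<in> Pc (f, m)"
  unfolding Pc_def cpkey_fm using assms h12 unfolding skey_def Hbar_def by auto

lemma Pc_fm_nr:
  assumes "x \<in> H" "y \<in> H" "x' \<in> H" "y' \<in> H"
    "(x, y) \<noteq> (h1, h1)" "(x, y) \<noteq> (h2, h2)" "(x', y') \<noteq> (h1, h1)" "(x', y') \<noteq> (h2, h2)"
    "rk f x < rk f x' \<or> (x = x' \<and> rk m y < rk m y')"
  shows "((Some x, Some y), (Some x', Some y')) \<in> Pc (f, m)"
  unfolding Pc_def cpkey_fm using assms ckey_SS_less[OF assms(1-4), of f m] unfolding skey_def Hbar_def
  by auto

lemma partners_f: "partners f = {m}" and partners_m: "partners m = {f}"
  unfolding partners_def using fmC C_fst_uniq C_snd_uniq C_not_both by blast+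

lemma not_partner_fm: "x \<noteq> f \<Longrightarrow> x \<noteq> m \<Longrightarrow> m \<notin> partners x \<and> f \<notin> partners x"
  unfolding partners_def using fmC C_fst_uniq C_snd_uniq C_not_both by blast

lemma two_sub:
  assumes "card X = 2" "X \<subseteq> {p, q}" shows "X = {p, q}"
proof -
  have c2: "card {p, q} \<le> 2" by (cases "p = q") auto
  have "card X \<le> card {p, q}" using assms(2) by (intro card_mono) auto
  then have "card X = card {p, q}" using c2 assms(1) by simp
  then show ?thesis using card_subset_eq[of "{p, q}" X] assms(2) by simp
qed

lemma two_sup:
  assumes "card X = 2" "{p, q} \<subseteq> X" "p \<noteq> q" shows "X = {p, q}"
proof -
  have fX: "finite X" using assms(1) card_gt_0_iff by fastforce
  have "card {p, q} = card X" using assms by simp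
  then show ?thesis using card_subset_eq[OF fX assms(2)] by simp
qed

lemma A_disj: "h \<noteq> h' \<Longrightarrow> A \<mu> h \<inter> A \<mu> h' = {}" unfolding assigned_def by auto

lemma gadget:
  assumes st: "stab \<mu>" and b: "b \<in> D" "b \<noteq> f" "b \<noteq> g1" "b \<noteq> m" "w b < w g1"
    and D1: "Des h1 \<subseteq> A \<mu> h1" and D2: "Des h2 \<subseteq> A \<mu> h2"
    and U: "A \<mu> h1 \<union> A \<mu> h2 = Des h1 \<union> Des h2 \<union> {f, g1, m, b}"
    and bDes: "b \<notin> Des h1 \<union> Des h2"
  shows False
proof -
  let ?A1 = "A \<mu> h1" and ?A2 = "A \<mu> h2"
  let ?X1 = "?A1 - Des h1"
  have disj: "?A1 \<inter> ?A2 = {}" using A_disj[OF h12(3)] by simp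
  have k1: "2 \<le> \<kappa> h1" using kappa2 h12 by auto
  have cX1: "card ?X1 = 2"
    using card_Diff_subset[OF finDes D1] cardA[OF st h12(1)] Des_card1 k1 by simp
  have GnD: "x \<in> G \<Longrightarrow> x \<notin> Des h" for x h unfolding Des_def by auto
  have X1sub: "?X1 \<subseteq> {f, g1, m, b}"
  proof
    fix x assume x: "x \<in> ?X1"
    then have "x \<in> Des h1 \<union> Des h2 \<union> {f, g1, m, b}" using U by blast
    moreover have "x \<notin> Des h2" using x D2 disj by blast
    ultimately show "x \<in> {f, g1, m, b}" using x by blast
  qed
  have inX1: "x \<in> ?A1 \<Longrightarrow> x \<in> G \<Longrightarrow> x \<in> ?X1" for x using GnD by blast
  have mem2: "x \<in> {f, g1, m, b} \<Longrightarrow> x \<notin> ?A1 \<Longrightarrow> x \<in> ?A2" for x using U by blast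
  have inA: "x \<in> A \<mu> h \<longleftrightarrow> \<mu> x = Some h" if "x \<in> D" for x h using that unfolding assigned_def by auto
  have fD': "f \<in> D" "m \<in> D" "g1 \<in> D" using fD mD g1D by auto
  have wfb: "w b < w f" using b wf by simp
  have cA1: "card ?A1 \<le> \<kappa> h1" and cA2: "card ?A2 \<le> \<kappa> h2" using cardA[OF st] h12 by auto
  have rg1: "rk g1 h1 < rk g1 h2" using rk_G1 rk_G2 by simp
  show False
  proof (cases "f \<in> ?A1")
    case fA: True
    show False
    proof (cases "m \<in> ?A1")
      case mA: True
      have "?X1 = {f, m}" using two_sup[OF cX1, of f m] inX1 fA mA fm_ne by auto
      then have "g1 \<notin> ?A1" using dist GnD by auto
      then have g1A2: "g1 \<in> ?A2" using mem2 by auto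
      have "\<mu> g1 = Some h2" using g1A2 fD' inA by auto
      moreover have "m \<notin> partners g1" using not_partner_fm dist by auto
      ultimately show False using move[OF st g1D dist(1,2) h12(1) _ h12(2) rg1 mA wf(4)] by blast
    next
      case mA: False
      show False
      proof (cases "g1 \<in> ?A1")
        case gA: True
        have X: "?X1 = {f, g1}" using two_sup[OF cX1, of f g1] inX1 fA gA dist by auto
        then have "b \<notin> ?A1" using b bDes by auto
        then have bA2: "b \<in> ?A2" using mem2 by auto
        have mA2: "m \<in> ?A2" using mem2 mA by auto
        have fA2: "f \<notin> ?A2" using fA disj by blast
        have muf: "\<mu> f = Some h1" and mum: "\<mu> m = Some h2" using fA mA2 fD' inA by auto
        have pr: "((Some h2, Some h2), (\<mu> f, \<mu> m)) \<in> Pc (f, m)"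
          using Pc_fm_h2[of "(Some h1, Some h2)"] muf mum h12 Hbar_SS by auto
        have "interested \<kappa> D Ph \<mu> h2 {f, m}"
          using int_swap2a[OF cA2 fD'(1) fA2 mA2 bA2 b(4) wfb] .
        then have "blocks_couple \<kappa> D Pc Ph \<mu> h2 h2 (f, m)" using BC_tog[OF pr] by blast
        then show False using couple_block[OF st fmC h12(2) h12(2)] by blast
      next
        case gA: False
        have "?X1 \<subseteq> {f, b}" using X1sub mA gA by blast
        then have X: "?X1 = {f, b}" using two_sub[OF cX1] by blast
        then have bA1: "b \<in> ?A1" by auto
        have g1A2: "g1 \<in> ?A2" and mA2: "m \<in> ?A2" using mem2 mA gA by auto
        have mug: "\<mu> g1 = Some h2" using g1A2 fD' inA by auto
        show False
        proof (cases "b \<in> partners g1")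
          case False
          then show False using move[OF st g1D dist(1,2) h12(1) mug h12(2) rg1 bA1 b(5)] by blast
        next
          case True
          then have "(g1, b) \<in> C \<or> (b, g1) \<in> C" unfolding partners_def by auto
          moreover have "(b, g1) \<notin> C" using C_w b(5) by fastforce
          ultimately have c: "(g1, b) \<in> C" by blast
          show False
          proof (cases "w b < w m")
            case True
            have muf: "\<mu> f = Some h1" and mum: "\<mu> m = Some h2" using fA mA2 fD' inA by auto
            have pr: "((Some h1, Some h1), (\<mu> f, \<mu> m)) \<in> Pc (f, m)"
              using Pc_fm_top[of "(Some h1, Some h2)"] muf mum h12 Hbar_SS by auto
            have "interested \<kappa> D Ph \<mu> h1 {m, f}"
              using int_swap2a[OF cA1 fD'(2) mA fA bA1 b(2) True] .
            then have "blocks_couple \<kappa> D Pc Ph \<mu> h1 h1 (f, m)" using BC_tog[OF pr] by (simp add: insert_commute)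
            then show False using couple_block[OF st fmC h12(1) h12(1)] by blast
          next
            case False
            then have wmb: "w m < w b" using w_eq[OF mD b(1)] b(4) by fastforce
            have mub: "\<mu> b = Some h1" using bA1 b inA by auto
            show False using fallback[OF st c dist(1) h12(1) h12(2) h12(3) mug h12(2) rg1 mub bA1 b(5) mA2 wmb] .
          qed
        qed
      qed
    qed
  next
    case fA: False
    have fA2: "f \<in> ?A2" using mem2 fA by auto
    have muf: "\<mu> f = Some h2" using fA2 fD' inA by auto
    show False
    proof (cases "m \<in> ?A1")
      case mA: True
      have "m \<in> ?X1" using inX1 mA by auto
      moreover have "?X1 \<noteq> {m}" using cX1 by auto
      ultimately obtain u where u: "u \<in> ?X1" "u \<noteq> m" by blast
      then have "u \<in> {g1, b}" using X1sub fA by auto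
      then have wu: "w u < w f" using wf wfb by auto
      have mum: "\<mu> m = Some h1" using mA fD' inA by auto
      have pr: "((Some h1, Some h1), (\<mu> f, \<mu> m)) \<in> Pc (f, m)"
        using Pc_fm_top[of "(Some h2, Some h1)"] muf mum h12 Hbar_SS by auto
      have "interested \<kappa> D Ph \<mu> h1 {f, m}"
        using int_swap2a[OF cA1 fD'(1) fA mA _ u(2) wu] u by auto
      then have "blocks_couple \<kappa> D Pc Ph \<mu> h1 h1 (f, m)" using BC_tog[OF pr] by blast
      then show False using couple_block[OF st fmC h12(1) h12(1)] by blast
    next
      case mA: False
      have mA2: "m \<in> ?A2" using mem2 mA by auto
      have mum: "\<mu> m = Some h2" using mA2 fD' inA by auto
      have "?X1 \<subseteq> {g1, b}" using X1sub mA fA by blast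
      then have X: "?X1 = {g1, b}" using two_sub[OF cX1] by blast
      have pr: "((Some h1, Some h1), (\<mu> f, \<mu> m)) \<in> Pc (f, m)"
        using Pc_fm_top[of "(Some h2, Some h2)"] muf mum h12 Hbar_SS by auto
      have "interested \<kappa> D Ph \<mu> h1 {f, m}"
        using int_swap2b[OF cA1 fD'(1,2) fA mA fm_ne, of g1 b] X b wf by auto
      then have "blocks_couple \<kappa> D Pc Ph \<mu> h1 h1 (f, m)" using BC_tog[OF pr] by blast
      then show False using couple_block[OF st fmC h12(1) h12(1)] by blast
    qed
  qed
qed

end

context construction begin

lemma inA_iff: "x \<in> D \<Longrightarrow> x \<in> A \<mu> h \<longleftrightarrow> \<mu> x = Some h" unfolding assigned_def by auto

lemma wG_le_f: "g \<in> G \<Longrightarrow> w g \<le> w f" using wf by auto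

lemma placed_world: "d \<notin> G \<Longrightarrow> placed \<mu> d \<longleftrightarrow> \<mu> d = Some (t d)" unfolding placed_def by auto
lemma placed_G: "d \<in> G \<Longrightarrow> placed \<mu> d \<longleftrightarrow> \<mu> d = Some h1 \<or> \<mu> d = Some h2" unfolding placed_def by auto

lemma Des_mem: "v \<in> Des h \<longleftrightarrow> v \<in> world \<and> t v = h" unfolding Des_def by auto

lemma card_Des12: "card (Des h1 \<union> Des h2) = \<kappa> h1 + \<kappa> h2 - 4"
proof -
  have "card (Des h1 \<union> Des h2) = card (Des h1) + card (Des h2)"
    using finDes Des_disj[OF h12(3)] by (intro card_Un_disjoint) auto
  then show ?thesis using Des_card1 Des_card2 kappa2 h12 by simp
qed

lemma cardY: "stab \<mu> \<Longrightarrow> card (A \<mu> h1 \<union> A \<mu> h2) = \<kappa> h1 + \<kappa> h2"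
  using card_Un_disjoint[OF A_fin A_fin A_disj[OF h12(3)]] cardA h12 by simp

lemma W3k3:
  assumes st: "stab \<mu>" and d: "d \<in> world" "t d = h2" and np: "\<not> placed \<mu> d"
    and hi: "\<forall>e\<in>D. w d < w e \<longrightarrow> placed \<mu> e"
    and S2: "3 \<le> card {g \<in> G. \<mu> g = Some h2 \<and> w d < w g}"
  shows False
proof -
  define S2 where "S2 = {g \<in> G. \<mu> g = Some h2 \<and> w d < w g}"
  have S2mem: "g \<in> S2 \<longleftrightarrow> g \<in> G \<and> \<mu> g = Some h2 \<and> w d < w g" for g unfolding S2_def by blast
  have S2c: "3 \<le> card S2" using S2 unfolding S2_def .
  let ?A1 = "A \<mu> h1"
  let ?X1 = "?A1 - Des h1"
  have dD: "d \<in> D" using d by auto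
  have fG: "finite G" by simp
  have sub: "S2 \<subseteq> G" using S2mem by blast
  have fS: "finite S2" using finite_subset[OF sub] by simp
  have "card (G - S2) = card G - card S2" using card_Diff_subset[OF fS sub] .
  then have cG: "card (G - S2) \<le> 1" using S2c G_card by linarith
  have finG: "finite G" by simp
  have finGS: "finite (G - S2)" using finite_Diff[OF finG] .
  have cG': "card (G - S2) \<le> Suc 0" using cG by simp
  have allq: "\<forall>x\<in>G - S2. \<forall>y\<in>G - S2. x = y" using card_le_Suc0_iff_eq[OF finGS] cG' by blast
  have one: "x \<in> G - S2 \<Longrightarrow> y \<in> G - S2 \<Longrightarrow> x = y" for x y using allq by blast
  have "S2 \<noteq> {}"
  proof
    assume "S2 = {}"
    then show False using S2c by simp
  qed
  then obtain g0 where g0: "g0 \<in> S2" by blast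
  note S2mem[simp]
  have fab: "w d < w f" using g0 wG_le_f S2mem by force
  have D1: "Des h1 \<subseteq> ?A1"
  proof
    fix v assume v: "v \<in> Des h1"
    then have vw: "v \<in> world" "t v = h1" using Des_mem by auto
    then have "w d < w v" using Vtop d h12 by auto
    then have "placed \<mu> v" using hi vw by auto
    moreover have "v \<in> D" "v \<notin> G" using vw by auto
    ultimately show "v \<in> ?A1" using vw placed_world[of v \<mu>] inA_iff[of v \<mu> h1] by auto
  qed
  have k1: "2 \<le> \<kappa> h1" using kappa2 h12 by auto
  have cX1: "card ?X1 = 2"
    using card_Diff_subset[OF finDes D1] cardA[OF st h12(1)] Des_card1 k1 by simp
  have Xprop: "(x \<in> G \<and> x \<notin> S2) \<or> (x \<notin> G \<and> w x \<le> w d)" if x: "x \<in> ?X1" for x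
  proof (cases "x \<in> G")
    case True
    have "x \<in> D" using x A_sub[of \<mu> h1] by blast
    then have "\<mu> x = Some h1" using x inA_iff[of x \<mu> h1] by blast
    then show ?thesis using True h12 by auto
  next
    case False
    have xD: "x \<in> D" using x A_sub[of \<mu> h1] by blast
    have mux: "\<mu> x = Some h1" using x inA_iff[of x \<mu> h1] xD by blast
    have "t x \<noteq> h1" using x False xD Des_mem by auto
    then have "\<not> placed \<mu> x" using False mux placed_world[of x \<mu>] by auto
    then have "\<not> w d < w x" using hi xD by auto
    then show ?thesis using False by auto
  qed
  obtain hf hm where hf: "hf \<in> H" "\<mu> f = Some hf" and hm: "hm \<in> H" "\<mu> m = Some hm"
    using matched[OF st fD] matched[OF st mD] by metis
  have notboth: "\<not> (hf = h1 \<and> hm = h1)"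
  proof
    assume "hf = h1 \<and> hm = h1"
    then have "f \<in> G - S2" "m \<in> G - S2" using hf hm h12 by auto
    then show False using one fm_ne by blast
  qed
  have pr: "((Some h1, Some h1), (\<mu> f, \<mu> m)) \<in> Pc (f, m)"
    using Pc_fm_top[of "(Some hf, Some hm)"] hf hm notboth Hbar_SS by auto
  have cA1: "card ?A1 \<le> \<kappa> h1" using cardA[OF st h12(1)] by simp
  have fGnD: "x \<in> G \<Longrightarrow> x \<notin> Des h" for x h using Des_mem by auto
  have int: "interested \<kappa> D Ph \<mu> h1 {f, m}"
  proof (cases "hf = h1")
    case True
    then have fA: "f \<in> ?A1" using hf fD inA_iff[of f \<mu> h1] by blast
    have mA: "m \<notin> ?A1" using notboth True hm mD inA_iff[of m \<mu> h1] by auto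
    have fS: "f \<in> G - S2" using True hf h12 by auto
    have "m \<notin> G - S2" using one[OF fS] fm_ne by blast
    then have wm: "w d < w m" by auto
    have "f \<in> ?X1" using fA fGnD by auto
    moreover have "?X1 \<noteq> {f}" using cX1 by auto
    ultimately obtain x where x: "x \<in> ?X1" "x \<noteq> f" by blast
    have "x \<notin> G"
    proof
      assume "x \<in> G"
      then have "x \<in> G - S2" using Xprop[OF x(1)] by auto
      then show False using one[OF fS] x(2) by blast
    qed
    then have "w x \<le> w d" using Xprop[OF x(1)] by auto
    then have "interested \<kappa> D Ph \<mu> h1 {m, f}"
      using int_swap2a[OF cA1 mD mA fA, of x] x wm by auto
    then show ?thesis by (simp add: insert_commute)
  next
    case False
    then have fA: "f \<notin> ?A1" using hf fD inA_iff[of f \<mu> h1] by auto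
    show ?thesis
    proof (cases "hm = h1")
      case True
      then have mA: "m \<in> ?A1" using hm mD inA_iff[of m \<mu> h1] by blast
      have mS: "m \<in> G - S2" using True hm h12 by auto
      have "m \<in> ?X1" using mA fGnD by auto
      moreover have "?X1 \<noteq> {m}" using cX1 by auto
      ultimately obtain x where x: "x \<in> ?X1" "x \<noteq> m" by blast
      have "x \<notin> G"
      proof
        assume "x \<in> G"
        then have "x \<in> G - S2" using Xprop[OF x(1)] by auto
        then show False using one[OF mS] x(2) by blast
      qed
      then have "w x \<le> w d" using Xprop[OF x(1)] by auto
      then show ?thesis using int_swap2a[OF cA1 fD fA mA, of x] x fab by auto
    next
      case False
      then have mA: "m \<notin> ?A1" using hm mD inA_iff[of m \<mu> h1] by auto
      obtain u v where uv: "?X1 = {u, v}" "u \<noteq> v" using cX1 card_2_iff by metis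
      have wlt: "w x < w f" if x: "x \<in> ?X1" for x
      proof (cases "x \<in> G")
        case True
        have "x \<noteq> f" "x \<noteq> m" using x fA mA by auto
        then show ?thesis using True wf by auto
      next
        case False
        then show ?thesis using Xprop[OF x] fab by auto
      qed
      show ?thesis using int_swap2b[OF cA1 fD mD fA mA fm_ne, of u v] uv wlt by auto
    qed
  qed
  have "blocks_couple \<kappa> D Pc Ph \<mu> h1 h1 (f, m)" using BC_tog[OF pr int] .
  then show False using couple_block[OF st fmC h12(1) h12(1)] by blast
qed

lemma card2_other: "2 \<le> card X \<Longrightarrow> \<exists>x\<in>X. x \<noteq> a"
proof (rule ccontr)
  assume c: "2 \<le> card X" and n: "\<not> (\<exists>x\<in>X. x \<noteq> a)"
  then have "X \<subseteq> {a}" by blast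
  then have "card X \<le> card {a}" by (intro card_mono) auto
  then show False using c by simp
qed

lemma card1_ex: "1 \<le> card X \<Longrightarrow> \<exists>x. x \<in> X"
  using card_gt_0_iff by fastforce

lemma G_common:
  assumes st: "stab \<mu>" and dG: "d \<in> G" and np: "\<not> placed \<mu> d"
  obtains x where "x \<in> H" "x \<noteq> h1" "x \<noteq> h2" "\<mu> d = Some x"
proof -
  have dD: "d \<in> D" using dG G_D by auto
  obtain x where x: "x \<in> H" "\<mu> d = Some x" using matched[OF st dD] by blast
  then have "x \<noteq> h1" "x \<noteq> h2" using np placed_G[OF dG, of \<mu>] by auto
  then show ?thesis using that x by blast
qed

lemma U12_sub:
  assumes st: "stab \<mu>" and d: "d \<in> D"
    and hi: "\<forall>e\<in>D. w d < w e \<longrightarrow> placed \<mu> e"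
  shows "{e \<in> A \<mu> h1 \<union> A \<mu> h2. w d < w e} \<subseteq> Des h1 \<union> Des h2 \<union> {g \<in> G. w d < w g}"
proof
  fix e assume e: "e \<in> {e \<in> A \<mu> h1 \<union> A \<mu> h2. w d < w e}"
  then have eD: "e \<in> D" using A_sub[of \<mu> h1] A_sub[of \<mu> h2] by blast
  have pl: "placed \<mu> e" using hi eD e by blast
  have mu12: "\<mu> e = Some h1 \<or> \<mu> e = Some h2" using e inA_iff[OF eD, of \<mu> h1] inA_iff[OF eD, of \<mu> h2] by blast
  show "e \<in> Des h1 \<union> Des h2 \<union> {g \<in> G. w d < w g}"
  proof (cases "e \<in> G")
    case True then show ?thesis using e by blast
  next
    case False
    then have "\<mu> e = Some (t e)" using pl placed_world by blast
    then have "t e = h1 \<or> t e = h2" using mu12 by auto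
    then show ?thesis using False eD Des_mem by blast
  qed
qed

lemma Gf:
  assumes st: "stab \<mu>" and np: "\<not> placed \<mu> f" and hi: "\<forall>e\<in>D. w f < w e \<longrightarrow> placed \<mu> e"
  shows False
proof -
  obtain x where x: "x \<in> H" "x \<noteq> h1" "x \<noteq> h2" "\<mu> f = Some x" using G_common[OF st fmG(1) np] by blast
  let ?A1 = "A \<mu> h1"
  have fA1: "f \<notin> ?A1" using x inA_iff[OF fD, of \<mu> h1] by auto
  have sub: "{e \<in> ?A1. w f < w e} \<subseteq> Des h1"
  proof
    fix e assume e: "e \<in> {e \<in> ?A1. w f < w e}"
    then have eD: "e \<in> D" using A_sub[of \<mu> h1] by blast
    have eG: "e \<notin> G" using e wG_le_f by fastforce
    have "placed \<mu> e" using hi eD e by blast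
    then have "\<mu> e = Some (t e)" using placed_world[OF eG] by blast
    moreover have "\<mu> e = Some h1" using e inA_iff[OF eD, of \<mu> h1] by blast
    ultimately show "e \<in> Des h1" using eG eD Des_mem by auto
  qed
  have k1: "2 \<le> \<kappa> h1" using kappa2 h12 by auto
  have "2 \<le> card {e \<in> ?A1. w e < w f}"
    by (rule count_below[OF A_sub A_fin cardA[OF st h12(1)] fD fA1 sub finDes]) (use Des_card1 k1 in simp)
  then obtain e where "e \<in> {e \<in> ?A1. w e < w f}" "e \<noteq> m"
    using card2_other[of "{e \<in> ?A1. w e < w f}" m] by blast
  then have e: "e \<in> ?A1" "w e < w f" "e \<noteq> m" by auto
  obtain hm where hm: "hm \<in> H" "\<mu> m = Some hm" using matched[OF st mD] by blast
  have cA1: "card ?A1 \<le> \<kappa> h1" using cardA[OF st h12(1)] by simp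
  show False
  proof (cases "hm = h1")
    case True
    have pr: "((Some h1, Some h1), (\<mu> f, \<mu> m)) \<in> Pc (f, m)"
      using Pc_fm_top[of "(Some x, Some hm)"] x hm Hbar_SS by auto
    have mA: "m \<in> ?A1" using hm True inA_iff[OF mD, of \<mu> h1] by auto
    have "interested \<kappa> D Ph \<mu> h1 {f, m}" using int_swap2a[OF cA1 fD fA1 mA e(1) e(3) e(2)] .
    then have "blocks_couple \<kappa> D Pc Ph \<mu> h1 h1 (f, m)" using BC_tog[OF pr] by blast
    then show False using couple_block[OF st fmC h12(1) h12(1)] by blast
  next
    case False
    have pr: "((Some h1, Some hm), (\<mu> f, \<mu> m)) \<in> Pc (f, m)"
      using Pc_fm_nr[of h1 hm x hm] x hm False h12 rk_G1[of f] rk_G3[of f x] by auto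
    have "blocks_couple \<kappa> D Pc Ph \<mu> h1 hm (f, m)"
    proof (rule BC_fst[OF pr hm(2)])
      show "\<mu> f \<noteq> Some h1" using x by simp
      show "interested \<kappa> D Ph \<mu> h1 {f}" if "h1 \<noteq> hm" using int_swap1[OF cA1 fD fA1 e(1,2)] .
      show "interested \<kappa> D Ph \<mu> h1 {f, m}" if "h1 = hm" using that False by simp
    qed
    then show False using couple_block[OF st fmC h12(1) hm(1)] by blast
  qed
qed

lemma Gm:
  assumes st: "stab \<mu>" and np: "\<not> placed \<mu> m" and hi: "\<forall>e\<in>D. w m < w e \<longrightarrow> placed \<mu> e"
  shows False
proof -
  obtain x where x: "x \<in> H" "x \<noteq> h1" "x \<noteq> h2" "\<mu> m = Some x" using G_common[OF st fmG(2) np] by blast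
  let ?Y = "A \<mu> h1 \<union> A \<mu> h2"
  have YD: "?Y \<subseteq> D" using A_sub[of \<mu> h1] A_sub[of \<mu> h2] by blast
  have fY: "finite ?Y" using A_fin[of \<mu> h1] A_fin[of \<mu> h2] by blast
  have mY: "m \<notin> ?Y" using x inA_iff[OF mD, of \<mu> h1] inA_iff[OF mD, of \<mu> h2] by auto
  have sub: "{e \<in> ?Y. w m < w e} \<subseteq> Des h1 \<union> Des h2 \<union> {f, g1, g2}"
    using U12_sub[OF st mD hi] by auto
  have c3: "card {f, g1, g2} \<le> 3" by (simp add: card_insert_if)
  have cZ: "card (Des h1 \<union> Des h2 \<union> {f, g1, g2}) \<le> \<kappa> h1 + \<kappa> h2 - 4 + 3"
    using card_Un_le[of "Des h1 \<union> Des h2" "{f, g1, g2}"] card_Des12 c3 by linarith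
  have k: "2 \<le> \<kappa> h1" "2 \<le> \<kappa> h2" using kappa2 h12 by auto
  have "1 \<le> card {e \<in> ?Y. w e < w m}"
    by (rule count_below[OF YD fY cardY[OF st] mD mY sub]) (use cZ k finDes in auto)
  then obtain e where "e \<in> {e \<in> ?Y. w e < w m}" using card1_ex[of "{e \<in> ?Y. w e < w m}"] by blast
  then have e: "e \<in> ?Y" "w e < w m" by auto
  have eD: "e \<in> D" using e YD by blast
  obtain he where he: "he = h1 \<or> he = h2" "e \<in> A \<mu> he" using e by blast
  have heH: "he \<in> H" using he h12 by auto
  have muf: "\<mu> f = Some h1 \<or> \<mu> f = Some h2" using hi fD wf placed_G[of f \<mu>] by auto
  then obtain hf where hf: "hf = h1 \<or> hf = h2" "\<mu> f = Some hf" by blast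
  have hfH: "hf \<in> H" using hf h12 by auto
  have ef: "e \<noteq> f" using e wf by auto
  have mA: "m \<notin> A \<mu> he" using x he inA_iff[OF mD, of \<mu> he] by auto
  have cA: "card (A \<mu> he) \<le> \<kappa> he" using cardA[OF st heH] by simp
  show False
  proof (cases "hf = he")
    case True
    have pr: "((Some he, Some he), (\<mu> f, \<mu> m)) \<in> Pc (f, m)"
    proof (cases "he = h1")
      case True then show ?thesis using Pc_fm_top[of "(Some hf, Some x)"] x hf hfH Hbar_SS by auto
    next
      case False then show ?thesis using Pc_fm_h2[of "(Some hf, Some x)"] x hf he hfH Hbar_SS \<open>hf = he\<close> by auto
    qed
    have fA: "f \<in> A \<mu> he" using hf True inA_iff[OF fD, of \<mu> he] by auto
    have "interested \<kappa> D Ph \<mu> he {m, f}" using int_swap2a[OF cA mD mA fA he(2) ef e(2)] .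
    then have "blocks_couple \<kappa> D Pc Ph \<mu> he he (f, m)" using BC_tog[OF pr] by (simp add: insert_commute)
    then show False using couple_block[OF st fmC heH heH] by blast
  next
    case False
    have rm: "rk m he < rk m x" using he rk_G1[of m] rk_G2[of m] rk_G3[of m x] x by auto
    have pr: "((Some hf, Some he), (\<mu> f, \<mu> m)) \<in> Pc (f, m)"
      using Pc_fm_nr[of hf he hf x] x hf hfH heH False rm h12 he by auto
    have "blocks_couple \<kappa> D Pc Ph \<mu> hf he (f, m)"
    proof (rule BC_snd[OF pr hf(2)])
      show "\<mu> m \<noteq> Some he" using x he by auto
      show "interested \<kappa> D Ph \<mu> he {m}" if "hf \<noteq> he" using int_swap1[OF cA mD mA he(2) e(2)] .
      show "interested \<kappa> D Ph \<mu> hf {f, m}" if "hf = he" using that False by simp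
    qed
    then show False using couple_block[OF st fmC hfH heH] by blast
  qed
qed

end

context construction begin

lemma Y_split:
  assumes "Y \<subseteq> D" "d \<in> D" "d \<notin> Y"
  shows "Y = {e \<in> Y. w d < w e} \<union> {e \<in> Y. w e < w d}"
proof (intro equalityI subsetI)
  fix e assume e: "e \<in> Y"
  then have "e \<in> D" "e \<noteq> d" using assms by auto
  then have "w e \<noteq> w d" using w_eq assms(2) by blast
  then show "e \<in> {e \<in> Y. w d < w e} \<union> {e \<in> Y. w e < w d}" using e by auto
qed auto

lemma partner_avoid:
  assumes "1 \<le> card Bl" "(\<exists>p. p \<in> partners d) \<Longrightarrow> 2 \<le> card Bl"
  shows "\<exists>e\<in>Bl. e \<notin> partners d"
proof (cases "\<exists>p. p \<in> partners d")
  case True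
  then obtain p where p: "p \<in> partners d" by blast
  obtain e where "e \<in> Bl" "e \<noteq> p" using card2_other[of Bl p] assms True by blast
  then show ?thesis using partners_uniq[OF _ p] by blast
next
  case False
  obtain e where "e \<in> Bl" using card1_ex[of Bl] assms by blast
  then show ?thesis using False by blast
qed

lemma Gg:
  assumes st: "stab \<mu>" and dg: "d = g1 \<or> d = g2" and np: "\<not> placed \<mu> d"
    and hi: "\<forall>e\<in>D. w d < w e \<longrightarrow> placed \<mu> e"
  shows False
proof -
  have dG: "d \<in> G" using dg by auto
  have dD: "d \<in> D" using dG G_D by blast
  have dfm: "d \<noteq> f" "d \<noteq> m" using dg dist by auto
  obtain x where x: "x \<in> H" "x \<noteq> h1" "x \<noteq> h2" "\<mu> d = Some x" using G_common[OF st dG np] by blast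
  let ?Y = "A \<mu> h1 \<union> A \<mu> h2"
  define Bl where "Bl = {e \<in> ?Y. w e < w d}"
  define U where "U = {e \<in> ?Y. w d < w e}"
  have YD: "?Y \<subseteq> D" using A_sub[of \<mu> h1] A_sub[of \<mu> h2] by blast
  have fY: "finite ?Y" using A_fin[of \<mu> h1] A_fin[of \<mu> h2] by blast
  have dY: "d \<notin> ?Y" using x inA_iff[OF dD, of \<mu> h1] inA_iff[OF dD, of \<mu> h2] by auto
  have sub0: "U \<subseteq> Des h1 \<union> Des h2 \<union> {g \<in> G. w d < w g}" using U12_sub[OF st dD hi] unfolding U_def .
  have k: "2 \<le> \<kappa> h1" "2 \<le> \<kappa> h2" using kappa2 h12 by auto
  have exe: False if e: "e \<in> Bl" "e \<notin> partners d" for e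
  proof -
    obtain he where he: "he = h1 \<or> he = h2" "e \<in> A \<mu> he" using e unfolding Bl_def by blast
    have heH: "he \<in> H" using he h12 by auto
    have "rk d he < rk d x" using he rk_G1[OF dG] rk_G2[OF dG] rk_G3[OF dG x(2,3)] by auto
    moreover have "w e < w d" using e unfolding Bl_def by blast
    ultimately show False using move[OF st dD dfm heH x(4) x(1)] he(2) e(2) by blast
  qed
  have cnt: "j \<le> card Bl" if Zs: "U \<subseteq> Z" "finite Z" "card Z + j \<le> \<kappa> h1 + \<kappa> h2" for Z j
    using count_below[OF YD fY cardY[OF st] dD dY, of Z j] Zs unfolding U_def Bl_def by blast
  show False
  proof (cases "d = g1 \<or> w m < w g2")
    case True
    have Gab: "{g \<in> G. w d < w g} \<subseteq> {f, g1}" using dg True wf by auto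
    have c2: "card {f, g1} \<le> 2" by (simp add: card_insert_if)
    have cZ: "card (Des h1 \<union> Des h2 \<union> {f, g1}) \<le> \<kappa> h1 + \<kappa> h2 - 4 + 2"
      using card_Un_le[of "Des h1 \<union> Des h2" "{f, g1}"] card_Des12 c2 by linarith
    have "2 \<le> card Bl" by (rule cnt[of "Des h1 \<union> Des h2 \<union> {f, g1}"]) (use sub0 Gab cZ k finDes in auto)
    then obtain e where "e \<in> Bl" "e \<notin> partners d" using partner_avoid[of Bl d] by auto
    then show False using exe by blast
  next
    case False
    then have d2: "d = g2" and wg2: "w g2 < w m" using dg w_eq[OF mD g2D] dist(4) by auto
    have Gab: "{g \<in> G. w d < w g} \<subseteq> {f, g1, m}" using d2 by auto
    have c3: "card {f, g1, m} \<le> 3" by (simp add: card_insert_if)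
    have cZ: "card (Des h1 \<union> Des h2 \<union> {f, g1, m}) \<le> \<kappa> h1 + \<kappa> h2 - 4 + 3"
      using card_Un_le[of "Des h1 \<union> Des h2" "{f, g1, m}"] card_Des12 c3 by linarith
    have B1: "1 \<le> card Bl" by (rule cnt[of "Des h1 \<union> Des h2 \<union> {f, g1, m}"]) (use sub0 Gab cZ k finDes in auto)
    show False
    proof (cases "\<exists>e\<in>Bl. e \<notin> partners d")
      case True then show False using exe by blast
    next
      case False
      then have Bp: "Bl \<subseteq> partners g2" using d2 by blast
      obtain e0 where e0: "e0 \<in> Bl" using card1_ex[of Bl] B1 by blast
      have "\<not> w m < w g2" using wg2 by simp
      then have gz: "g2 = z \<or> (g2, z) \<in> C" using g2cond by blast
      show False
      proof (cases "g2 = z")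
        case True
        have "e0 \<in> D" "w e0 < w z" using e0 YD True d2 unfolding Bl_def by auto
        then show False using zlow by fastforce
      next
        case False
        then have c: "(g2, z) \<in> C" using gz by blast
        have zp: "z \<in> partners g2" using c unfolding partners_def by auto
        have Bz: "Bl = {z}" using Bp e0 partners_uniq[OF _ zp] by blast
        have zB: "z \<in> ?Y" "w z < w g2" using Bz d2 unfolding Bl_def by auto
        define Z0 where "Z0 = Des h1 \<union> Des h2 \<union> {f, g1, m}"
        have fZ0: "finite Z0" unfolding Z0_def using finDes by simp
        have disjZ: "(Des h1 \<union> Des h2) \<inter> {f, g1, m} = {}" using Des_mem by auto
        have cfgm: "card {f, g1, m} = 3" using dist fm_ne by simp
        have cZ0: "card Z0 = \<kappa> h1 + \<kappa> h2 - 1"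
          unfolding Z0_def using card_Un_disjoint[OF _ _ disjZ] finDes card_Des12 cfgm k by simp
        have UZ0: "U \<subseteq> Z0" using sub0 Gab unfolding Z0_def by auto
        have Ysplit: "?Y = U \<union> Bl" using Y_split[OF YD dD dY] unfolding U_def Bl_def .
        have "card ?Y \<le> card U + card Bl" using Ysplit card_Un_le[of U Bl] by simp
        then have "\<kappa> h1 + \<kappa> h2 \<le> card U + 1" using cardY[OF st] Bz by simp
        moreover have "card U \<le> card Z0" using card_mono[OF fZ0 UZ0] .
        ultimately have "card U = card Z0" using cZ0 k by linarith
        then have UeZ: "U = Z0" using card_subset_eq[OF fZ0 UZ0] by blast
        have Yeq: "?Y = Des h1 \<union> Des h2 \<union> {f, g1, m, z}" using Ysplit UeZ Bz unfolding Z0_def by auto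
        have DinY: "v \<in> Des h \<Longrightarrow> h = h1 \<or> h = h2 \<Longrightarrow> \<mu> v = Some h" for v h
        proof -
          assume v: "v \<in> Des h" and hh: "h = h1 \<or> h = h2"
          then have "v \<in> U" using UeZ unfolding Z0_def by auto
          then have vD: "v \<in> D" and "w d < w v" unfolding U_def using YD by auto
          then have "placed \<mu> v" using hi by blast
          moreover have "v \<notin> G" "t v = h" using v Des_mem by auto
          ultimately show "\<mu> v = Some h" using placed_world[of v \<mu>] by auto
        qed
        have D1: "Des h1 \<subseteq> A \<mu> h1"
        proof
          fix v assume v: "v \<in> Des h1"
          then have "v \<in> D" using Des_sub by blast
          then show "v \<in> A \<mu> h1" using DinY[OF v] inA_iff[of v \<mu> h1] by blast
        qed
        have D2: "Des h2 \<subseteq> A \<mu> h2"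
        proof
          fix v assume v: "v \<in> Des h2"
          then have "v \<in> D" using Des_sub by blast
          then show "v \<in> A \<mu> h2" using DinY[OF v] inA_iff[of v \<mu> h2] by blast
        qed
        have zD: "z \<in> D" using zD .
        have zne: "z \<noteq> f" "z \<noteq> g1" "z \<noteq> m" using zB wf wg2 by auto
        have zg1: "w z < w g1" using zB wf by auto
        have zDes: "z \<notin> Des h1 \<union> Des h2"
        proof
          assume "z \<in> Des h1 \<union> Des h2"
          then have "z \<in> U" using UeZ unfolding Z0_def by auto
          then show False using zB d2 unfolding U_def by auto
        qed
        show False using gadget[OF st zD zne zg1 D1 D2 Yeq zDes] .
      qed
    qed
  qed
qed

theorem no_stable: "\<not> (\<exists>\<mu>. stab \<mu>)"
proof
  assume "\<exists>\<mu>. stab \<mu>"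
  then obtain \<mu> where st: "stab \<mu>" by blast
  show False
  proof (cases "\<exists>d\<in>D. \<not> placed \<mu> d")
    case True
    define NP where "NP = {d \<in> D. \<not> placed \<mu> d}"
    have fNP: "finite NP" unfolding NP_def using finD by simp
    have neNP: "NP \<noteq> {}" unfolding NP_def using True by blast
    have "Max (w ` NP) \<in> w ` NP" using fNP neNP by (intro Max_in) auto
    then obtain ds where ds: "ds \<in> NP" "w ds = Max (w ` NP)" by (metis imageE)
    have dsD: "ds \<in> D" and np: "\<not> placed \<mu> ds" using ds(1) unfolding NP_def by auto
    have hi: "\<forall>e\<in>D. w ds < w e \<longrightarrow> placed \<mu> e"
    proof (intro ballI impI)
      fix e assume e: "e \<in> D" "w ds < w e"
      show "placed \<mu> e"
      proof (rule ccontr)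
        assume "\<not> placed \<mu> e"
        then have "e \<in> NP" unfolding NP_def using e by blast
        then have "w e \<le> Max (w ` NP)" using fNP by auto
        then show False using e ds(2) by simp
      qed
    qed
    show False
    proof (cases "ds \<in> G")
      case True
      then have "ds = f \<or> ds = m \<or> ds = g1 \<or> ds = g2" by auto
      then show False
      proof (elim disjE)
        assume "ds = f" then show False using Gf[OF st] np hi by blast
      next
        assume "ds = m" then show False using Gm[OF st] np hi by blast
      next
        assume "ds = g1" then show False using Gg[OF st _ np hi] by blast
      next
        assume "ds = g2" then show False using Gg[OF st _ np hi] by blast
      qed
    next
      case False
      have dsw: "ds \<in> world" using dsD False by blast
      let ?h = "t ds"
      have h: "?h \<in> H" using tH dsw by blast
      have dsA: "ds \<notin> A \<mu> ?h" using np placed_world[OF False, of \<mu>] inA_iff[OF dsD, of \<mu> ?h] by auto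
      have cAh: "card (A \<mu> ?h) = \<kappa> ?h" using cardA[OF st h] .
      have kh: "2 \<le> \<kappa> ?h" using kappa2[OF h] .
      show False
      proof (cases "\<exists>e\<in>A \<mu> ?h. w e < w ds")
        case True
        then obtain e where "e \<in> A \<mu> ?h" "w e < w ds" by blast
        then show False using world_W[OF st dsw np] by blast
      next
        case noL: False
        have "{e \<in> A \<mu> ?h. w e < w ds} = {}" using noL by blast
        then have L0: "card {e \<in> A \<mu> ?h. w e < w ds} = 0" by (simp only: card.empty)
        have cnt: "j \<le> card {e \<in> A \<mu> ?h. w e < w ds}"
          if Zs: "{e \<in> A \<mu> ?h. w ds < w e} \<subseteq> Z" "finite Z" "card Z + j \<le> \<kappa> ?h" for Z j
          using count_below[OF A_sub A_fin cAh dsD dsA Zs] .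
        have Uprop: "placed \<mu> e \<and> \<mu> e = Some ?h \<and> e \<in> D" if e: "e \<in> {e \<in> A \<mu> ?h. w ds < w e}" for e
        proof -
          have eD: "e \<in> D" using e A_sub[of \<mu> ?h] by blast
          then show ?thesis using e hi inA_iff[OF eD, of \<mu> ?h] by blast
        qed
        have fin1: "finite (Des h - {ds})" for h using finDes by blast
        show False
        proof (cases "?h = h1")
          case h1: True
          let ?Z = "(Des h1 - {ds}) \<union> {f}"
          have sub: "{e \<in> A \<mu> ?h. w ds < w e} \<subseteq> ?Z"
          proof
            fix e assume e: "e \<in> {e \<in> A \<mu> ?h. w ds < w e}"
            note up = Uprop[OF e]
            have we: "w ds < w e" using e by blast
            show "e \<in> ?Z"
            proof (cases "e \<in> G")
              case True
              have "w g1 < w ds" using Vabove dsw h1 by blast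
              then have "e \<noteq> g1" "e \<noteq> g2" "e \<noteq> m" using we wf by auto
              then show ?thesis using True by blast
            next
              case False
              then have "t e = h1" using up placed_world[OF False, of \<mu>] h1 by auto
              moreover have "e \<noteq> ds" using we by auto
              ultimately show ?thesis using False up Des_mem by blast
            qed
          qed
          have "card ?Z \<le> card (Des h1 - {ds}) + card {f}" using card_Un_le by blast
          moreover have "card (Des h1 - {ds}) = \<kappa> h1 - 3"
            using Des_card1 dsw h1 Des_mem finDes by simp
          ultimately have "card ?Z + 1 \<le> \<kappa> ?h" using kh h1 by simp
          then have "1 \<le> card {e \<in> A \<mu> ?h. w e < w ds}" using cnt[OF sub] fin1 by blast
          then show False using L0 by simp
        next
          case nh1: False
          show False
          proof (cases "?h = h2")
            case h2: True
            define S2 where "S2 = {g \<in> G. \<mu> g = Some h2 \<and> w ds < w g}"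
            show False
            proof (cases "3 \<le> card S2")
              case True
              then show False using W3k3[OF st dsw h2 np hi] unfolding S2_def by blast
            next
              case False
              let ?Z = "(Des h2 - {ds}) \<union> S2"
              have fS2: "finite S2" unfolding S2_def by simp
              have sub: "{e \<in> A \<mu> ?h. w ds < w e} \<subseteq> ?Z"
              proof
                fix e assume e: "e \<in> {e \<in> A \<mu> ?h. w ds < w e}"
                note up = Uprop[OF e]
                have we: "w ds < w e" using e by blast
                show "e \<in> ?Z"
                proof (cases "e \<in> G")
                  case True
                  then show ?thesis using up we h2 unfolding S2_def by auto
                next
                  case False
                  then have "t e = h2" using up placed_world[OF False, of \<mu>] h2 by auto
                  moreover have "e \<noteq> ds" using we by auto
                  ultimately show ?thesis using False up Des_mem by blast
                qed
              qed
              have "card ?Z \<le> card (Des h2 - {ds}) + card S2" using card_Un_le by blast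
              moreover have "card (Des h2 - {ds}) = \<kappa> h2 - 3"
                using Des_card2 dsw h2 Des_mem finDes by simp
              moreover have "1 \<le> card (Des h2)"
              proof -
                have "ds \<in> Des h2" using dsw h2 Des_mem by blast
                then have "Des h2 \<noteq> {}" by blast
                then show ?thesis using finDes[of h2] card_gt_0_iff[of "Des h2"] by linarith
              qed
              ultimately have "card ?Z + 1 \<le> \<kappa> ?h" using kh h2 False Des_card2 by simp
              then have "1 \<le> card {e \<in> A \<mu> ?h. w e < w ds}" using cnt[OF sub] fin1 fS2 by blast
              then show False using L0 by simp
            qed
          next
            case nh2: False
            let ?Z = "Des ?h - {ds}"
            have sub: "{e \<in> A \<mu> ?h. w ds < w e} \<subseteq> ?Z"
            proof
              fix e assume e: "e \<in> {e \<in> A \<mu> ?h. w ds < w e}"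
              note up = Uprop[OF e]
              have we: "w ds < w e" using e by blast
              have eG: "e \<notin> G"
              proof
                assume "e \<in> G"
                then have "\<mu> e = Some h1 \<or> \<mu> e = Some h2" using up placed_G by blast
                then show False using up nh1 nh2 by auto
              qed
              then have "\<mu> e = Some (t e)" using up placed_world by blast
              then have "t e = ?h" using up by auto
              moreover have "e \<noteq> ds" using we by auto
              ultimately show "e \<in> ?Z" using eG up Des_mem by blast
            qed
            have "card ?Z = \<kappa> ?h - 1" using Des_cardO[OF h nh1 nh2] dsw Des_mem finDes by simp
            then have "card ?Z + 1 \<le> \<kappa> ?h" using kh by simp
            then have "1 \<le> card {e \<in> A \<mu> ?h. w e < w ds}" using cnt[OF sub] fin1 by blast
            then show False using L0 by simp
          qed
        qed
      qed
    qed
  next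
    case False
    then have allp: "\<forall>d\<in>D. placed \<mu> d" by blast
    have DinA: "Des h \<subseteq> A \<mu> h" for h
    proof
      fix v assume v: "v \<in> Des h"
      then have vD: "v \<in> D" and vG: "v \<notin> G" and tv: "t v = h" using Des_mem by auto
      then have "\<mu> v = Some h" using allp placed_world[OF vG, of \<mu>] by auto
      then show "v \<in> A \<mu> h" using inA_iff[OF vD, of \<mu> h] by blast
    qed
    have Yeq: "A \<mu> h1 \<union> A \<mu> h2 = Des h1 \<union> Des h2 \<union> {f, g1, m, g2}"
    proof (intro equalityI subsetI)
      fix e assume e: "e \<in> A \<mu> h1 \<union> A \<mu> h2"
      then have eD: "e \<in> D" using A_sub[of \<mu> h1] A_sub[of \<mu> h2] by blast
      have mu12: "\<mu> e = Some h1 \<or> \<mu> e = Some h2"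
        using e inA_iff[OF eD, of \<mu> h1] inA_iff[OF eD, of \<mu> h2] by blast
      show "e \<in> Des h1 \<union> Des h2 \<union> {f, g1, m, g2}"
      proof (cases "e \<in> G")
        case True then show ?thesis by blast
      next
        case False
        then have "\<mu> e = Some (t e)" using allp eD placed_world by blast
        then have "t e = h1 \<or> t e = h2" using mu12 by auto
        then show ?thesis using False eD Des_mem by blast
      qed
    next
      fix e assume e: "e \<in> Des h1 \<union> Des h2 \<union> {f, g1, m, g2}"
      show "e \<in> A \<mu> h1 \<union> A \<mu> h2"
      proof (cases "e \<in> G")
        case True
        then have eD: "e \<in> D" using G_D by blast
        have "\<mu> e = Some h1 \<or> \<mu> e = Some h2" using allp eD placed_G[OF True] by blast
        then show ?thesis using inA_iff[OF eD, of \<mu> h1] inA_iff[OF eD, of \<mu> h2] by blast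
      next
        case False
        then show ?thesis using e DinA[of h1] DinA[of h2] by blast
      qed
    qed
    have g2Des: "g2 \<notin> Des h1 \<union> Des h2" using Des_mem by auto
    show False using gadget[OF st g2D dist(3) dist(5)[symmetric] dist(4) wf(5) DinA DinA Yeq g2Des] .
  qed
qed

end

lemma top_k:
  fixes w :: "'a \<Rightarrow> nat"
  assumes fin: "finite X" and inj: "inj_on w X" and k: "k \<le> card X"
  shows "\<exists>V\<subseteq>X. card V = k \<and> (\<forall>v\<in>V. \<forall>u\<in>X - V. w u < w v)"
  using k
proof (induction k)
  case 0
  then show ?case by (intro exI[of _ "{}"]) auto
next
  case (Suc k)
  then obtain V where V: "V \<subseteq> X" "card V = k" "\<forall>v\<in>V. \<forall>u\<in>X - V. w u < w v" by auto
  have fV: "finite V" using V(1) fin finite_subset by blast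
  have ne: "X - V \<noteq> {}"
  proof
    assume "X - V = {}"
    then have "X = V" using V(1) by auto
    then show False using Suc.prems V(2) by simp
  qed
  have fXV: "finite (X - V)" using fin by simp
  have "Max (w ` (X - V)) \<in> w ` (X - V)" using fXV ne by (intro Max_in) auto
  then obtain u0 where u0: "u0 \<in> X - V" "w u0 = Max (w ` (X - V))" by (metis imageE)
  have u0max: "\<forall>u\<in>X - V. w u \<le> w u0" using u0 fXV by auto
  let ?V = "insert u0 V"
  show ?case
  proof (intro exI conjI)
    show "?V \<subseteq> X" using V(1) u0 by auto
    show "card ?V = Suc k" using V(2) fV u0 by simp
    show "\<forall>v\<in>?V. \<forall>u\<in>X - ?V. w u < w v"
    proof (intro ballI)
      fix v u assume v: "v \<in> ?V" and u: "u \<in> X - ?V"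
      show "w u < w v"
      proof (cases "v = u0")
        case True
        have "w u \<le> w u0" using u0max u by auto
        moreover have "w u \<noteq> w u0" using inj u u0 unfolding inj_on_def by auto
        ultimately show ?thesis using True by simp
      next
        case False
        then have "v \<in> V" using v by auto
        then show ?thesis using V(3) u by auto
      qed
    qed
  qed
qed

lemma partition_exists:
  fixes s :: "'i \<Rightarrow> nat"
  assumes "finite I" "finite Y" "(\<Sum>i\<in>I. s i) = card Y"
  shows "\<exists>t. (\<forall>y\<in>Y. t y \<in> I) \<and> (\<forall>i\<in>I. card {y\<in>Y. t y = i} = s i)"
  using assms
proof (induction I arbitrary: Y rule: finite_induct)
  case empty
  then have "Y = {}" by simp
  then show ?case by auto
next
  case (insert i I)
  have si: "s i \<le> card Y" using insert by simp
  obtain Z where Z: "Z \<subseteq> Y" "card Z = s i" using obtain_subset_with_card_n[OF si] by metis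
  have fZ: "finite Z" using Z(1) insert.prems finite_subset by blast
  have "(\<Sum>j\<in>I. s j) = card (Y - Z)"
    using insert card_Diff_subset[OF fZ Z(1)] Z(2) by simp
  then obtain t where t: "\<forall>y\<in>Y - Z. t y \<in> I" "\<forall>j\<in>I. card {y\<in>Y - Z. t y = j} = s j"
    using insert.IH[of "Y - Z"] insert.prems by auto
  let ?t = "\<lambda>y. if y \<in> Z then i else t y"
  show ?case
  proof (intro exI conjI ballI)
    fix y assume "y \<in> Y" then show "?t y \<in> insert i I" using t by auto
  next
    fix j assume j: "j \<in> insert i I"
    show "card {y\<in>Y. ?t y = j} = s j"
    proof (cases "j = i")
      case True
      have "{y\<in>Y. ?t y = j} = Z" using True Z(1) t(1) insert.hyps(2) by auto
      then show ?thesis using Z(2) True by simp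
    next
      case False
      then have jI: "j \<in> I" using j by auto
      have "{y\<in>Y. ?t y = j} = {y\<in>Y - Z. t y = j}" using False by auto
      then show ?thesis using t(2) jI by simp
    qed
  qed
qed


lemma final_step:
  fixes H :: "'h set" and \<kappa> :: "'h \<Rightarrow> nat" and S :: "'d set" and C :: "('d \<times> 'd) set"
    and P0 :: "'d option rel" and f m g1 g2 z :: 'd and h1 h2 :: 'h
  assumes model: "standing_model H \<kappa> S C"
    and P0: "indiv_hosp_pref (doctors S C) P0"
    and labels: "\<forall>(a, b)\<in>C. (Some a, Some b) \<in> P0"
    and fmC: "(f, m) \<in> C"
    and g1D: "g1 \<in> doctors S C" and g2D: "g2 \<in> doctors S C"
    and dist: "g1 \<noteq> f" "g1 \<noteq> m" "g2 \<noteq> f" "g2 \<noteq> m" "g1 \<noteq> g2"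
    and h12: "h1 \<in> H" "h2 \<in> H" "h1 \<noteq> h2"
    and wts: "wt (doctors S C) P0 m < wt (doctors S C) P0 g1"
       "wt (doctors S C) P0 g1 < wt (doctors S C) P0 f"
       "wt (doctors S C) P0 g2 < wt (doctors S C) P0 g1"
    and zD: "z \<in> doctors S C"
    and zlow: "\<forall>d\<in>doctors S C. wt (doctors S C) P0 z \<le> wt (doctors S C) P0 d"
    and zpart: "\<forall>a. (a, z) \<in> C \<longrightarrow> a \<in> {f, g1, m, g2}"
    and g2cond: "wt (doctors S C) P0 m < wt (doctors S C) P0 g2 \<or> g2 = z \<or> (g2, z) \<in> C"
    and enough: "\<kappa> h1 - 2 \<le> card {v \<in> doctors S C - {f, g1, m, g2}. wt (doctors S C) P0 g1 < wt (doctors S C) P0 v}"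
  shows "\<exists>(Pd :: 'd \<Rightarrow> 'h option rel) (Pc :: 'd \<times> 'd \<Rightarrow> ('h option \<times> 'h option) rel)
            (Ph :: 'h \<Rightarrow> 'd set rel).
           (\<forall>d\<in>doctors S C. doctor_pref H (Pd d)) \<and>
           (\<forall>h\<in>H. hosp_pref_CPI (doctors S C) (\<kappa> h) P0 (Ph h)) \<and>
           (\<forall>(f, m)\<in>C. couple_pref H (Pc (f, m)) \<and> RVT H (Pd f) (Pd m) (Pc (f, m))) \<and>
           \<not> (\<exists>\<mu>. stable H \<kappa> S C Pd Pc Ph \<mu>)"
proof -
  define D where "D = doctors S C"
  define w where "w = wt D P0"
  define W where "W = D - {f, g1, m, g2}"
  have finH: "finite H" and finD: "finite D" and k2: "\<forall>h\<in>H. 2 \<le> \<kappa> h"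
    and sumk: "(\<Sum>h\<in>H. \<kappa> h) = card D"
    using model unfolding standing_model_def D_def doctors_def by auto
  have P0pref: "pref_on (insert None (Some ` D)) P0" using P0 unfolding indiv_hosp_pref_def D_def by auto
  interpret rk: rankctx D P0 using finD P0pref by unfold_locales
  have winj: "inj_on w D" unfolding w_def using rk.wt_inj .
  have fmD: "f \<in> D" "m \<in> D" using fmC unfolding D_def doctors_def by force+
  have GD: "{f, g1, m, g2} \<subseteq> D" using fmD g1D g2D unfolding D_def by auto
  have fm: "f \<noteq> m" using wts by auto
  have cardG: "card {f, g1, m, g2} = 4" using dist fm by auto
  have cW: "card W = card D - 4" unfolding W_def using card_Diff_subset[OF _ GD] cardG by simp
  have finW: "finite W" unfolding W_def using finD by simp
  let ?k1 = "\<kappa> h1 - 2"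
  have sum12: "\<kappa> h1 + \<kappa> h2 \<le> card D"
  proof -
    have "(\<Sum>h\<in>{h1, h2}. \<kappa> h) \<le> (\<Sum>h\<in>H. \<kappa> h)" using h12 finH by (intro sum_mono2) auto
    then show ?thesis using h12 sumk by simp
  qed
  have kk: "2 \<le> \<kappa> h1" "2 \<le> \<kappa> h2" using k2 h12 by auto
  have k1W: "?k1 \<le> card W" using cW sum12 kk by linarith
  have winjW: "inj_on w W" using winj unfolding W_def by (rule inj_on_subset) auto
  obtain V where V: "V \<subseteq> W" "card V = ?k1" "\<forall>v\<in>V. \<forall>u\<in>W - V. w u < w v"
    using top_k[OF finW winjW k1W] by blast
  have Vab: "w g1 < w v" if v: "v \<in> V" for v
  proof (rule ccontr)
    assume n: "\<not> w g1 < w v"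
    let ?X = "{u \<in> W. w g1 < w u}"
    have XV: "?X \<subseteq> V"
    proof
      fix u assume u: "u \<in> ?X"
      show "u \<in> V"
      proof (rule ccontr)
        assume "u \<notin> V"
        then have "w u < w v" using V(3) v u by blast
        then show False using u n by simp
      qed
    qed
    have vX: "v \<notin> ?X" using n by auto
    have "insert v ?X \<subseteq> V" using XV v by blast
    moreover have "finite V" using V(1) finW finite_subset by blast
    ultimately have "card (insert v ?X) \<le> card V" by (rule card_mono[rotated])
    moreover have "card (insert v ?X) = Suc (card ?X)" using vX finW by simp
    moreover have "?k1 \<le> card ?X" using enough unfolding W_def w_def D_def by simp
    ultimately show False using V(2) by simp
  qed
  define s where "s h = (if h = h2 then \<kappa> h2 - 2 else \<kappa> h)" for h
  have finI: "finite (H - {h1})" using finH by simp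
  have h2I: "h2 \<in> H - {h1}" using h12 by auto
  have sI: "(\<Sum>h\<in>H - {h1}. s h) = card (W - V)"
  proof -
    have a: "(\<Sum>h\<in>H - {h1}. s h) = s h2 + (\<Sum>h\<in>H - {h1} - {h2}. s h)"
      using sum.remove[OF finI h2I] by simp
    have b: "(\<Sum>h\<in>H - {h1}. \<kappa> h) = \<kappa> h2 + (\<Sum>h\<in>H - {h1} - {h2}. \<kappa> h)"
      using sum.remove[OF finI h2I] by simp
    have c: "(\<Sum>h\<in>H - {h1} - {h2}. s h) = (\<Sum>h\<in>H - {h1} - {h2}. \<kappa> h)"
      unfolding s_def by (intro sum.cong) auto
    have d: "(\<Sum>h\<in>H. \<kappa> h) = \<kappa> h1 + (\<Sum>h\<in>H - {h1}. \<kappa> h)"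
      using sum.remove[OF finH h12(1)] by simp
    have e: "card (W - V) = card W - card V"
      using card_Diff_subset[OF _ V(1)] finW V(1) finite_subset by metis
    show ?thesis using a b c d e sumk cW V(2) kk unfolding s_def by simp
  qed
  obtain t' where t': "\<forall>y\<in>W - V. t' y \<in> H - {h1}" "\<forall>i\<in>H - {h1}. card {y\<in>W - V. t' y = i} = s i"
    using partition_exists[OF finI _ sI] finW by blast
  define t where "t d = (if d \<in> V then h1 else t' d)" for d
  obtain idx where idx: "bij_betw idx H {0..<card H}" using ex_bij_betw_finite_nat[OF finH] by blast
  have idx_inj: "inj_on idx H" and idx_lt: "\<forall>h\<in>H. idx h < card H"
    using idx unfolding bij_betw_def by auto
  have tV: "{d \<in> W. t d = h1} = V"
    using V(1) t'(1) unfolding t_def by auto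
  have tO: "{d \<in> W. t d = h} = {y \<in> W - V. t' y = h}" if "h \<noteq> h1" for h
    using that unfolding t_def by auto
  have cons: "construction H \<kappa> S C P0 f m g1 g2 z h1 h2 t idx"
  proof (unfold_locales)
    show "\<forall>d\<in>doctors S C - {f, g1, m, g2}. t d \<in> H"
      using t'(1) h12 unfolding t_def W_def[symmetric] D_def[symmetric] by auto
    show "card {d \<in> doctors S C - {f, g1, m, g2}. t d = h1} = \<kappa> h1 - 2"
      using tV V(2) unfolding W_def D_def by simp
    show "card {d \<in> doctors S C - {f, g1, m, g2}. t d = h2} = \<kappa> h2 - 2"
      using tO[of h2] t'(2) h2I h12 unfolding W_def D_def s_def by simp
    show "\<forall>h\<in>H - {h1, h2}. card {d \<in> doctors S C - {f, g1, m, g2}. t d = h} = \<kappa> h"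
    proof
      fix h assume h: "h \<in> H - {h1, h2}"
      then have "h \<in> H - {h1}" by auto
      then show "card {d \<in> doctors S C - {f, g1, m, g2}. t d = h} = \<kappa> h"
        using tO[of h] t'(2) h unfolding W_def D_def s_def by simp
    qed
    show "\<forall>v\<in>doctors S C - {f, g1, m, g2}. t v = h1 \<longrightarrow> wt (doctors S C) P0 g1 < wt (doctors S C) P0 v"
      using tV Vab unfolding W_def D_def w_def by blast
    show "\<forall>v\<in>doctors S C - {f, g1, m, g2}. t v = h1 \<longrightarrow>
        (\<forall>u\<in>doctors S C - {f, g1, m, g2}. t u \<noteq> h1 \<longrightarrow> wt (doctors S C) P0 u < wt (doctors S C) P0 v)"
      using tV V(3) unfolding W_def D_def w_def by blast
  qed (use model P0 labels fmC g1D g2D dist h12 wts zD zlow zpart g2cond idx_inj idx_lt in auto)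
  interpret c: construction H \<kappa> S C P0 f m g1 g2 z h1 h2 t idx by (rule cons)
  show ?thesis
  proof (intro exI conjI)
    show "\<forall>d\<in>doctors S C. doctor_pref H (c.Pd d)" using c.Pd_pref by blast
    show "\<forall>h\<in>H. hosp_pref_CPI (doctors S C) (\<kappa> h) P0 (c.Ph h)" using c.Ph_CPI by blast
    show "\<forall>(a, b)\<in>C. couple_pref H (c.Pc (a, b)) \<and> RVT H (c.Pd a) (c.Pd b) (c.Pc (a, b))"
      using c.Pc_couple_pref c.Pc_RVT by blast
    show "\<not> (\<exists>\<mu>. stable H \<kappa> S C c.Pd c.Pc c.Ph \<mu>)" using c.no_stable .
  qed
qed


theorem theorem3:
  fixes H :: "'h set" and \<kappa> :: "'h \<Rightarrow> nat" and S :: "'d set" and C :: "('d \<times> 'd) set"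
    and P0 :: "'d option rel"
  assumes model: "standing_model H \<kappa> S C"
    and P0: "indiv_hosp_pref (doctors S C) P0"
    and labels: "\<forall>(f, m)\<in>C. (Some f, Some m) \<in> P0"
    and notSCPI: "\<not> SCPI H \<kappa> S C P0"
  shows "\<exists>(Pd :: 'd \<Rightarrow> 'h option rel) (Pc :: 'd \<times> 'd \<Rightarrow> ('h option \<times> 'h option) rel)
            (Ph :: 'h \<Rightarrow> 'd set rel).
           (\<forall>d\<in>doctors S C. doctor_pref H (Pd d)) \<and>
           (\<forall>h\<in>H. hosp_pref_CPI (doctors S C) (\<kappa> h) P0 (Ph h)) \<and>
           (\<forall>(f, m)\<in>C. couple_pref H (Pc (f, m)) \<and> RVT H (Pd f) (Pd m) (Pc (f, m))) \<and>
           \<not> (\<exists>\<mu>. stable H \<kappa> S C Pd Pc Ph \<mu>)"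
proof -
  define D where "D = doctors S C"
  define w where "w = wt D P0"
  have finH: "finite H" and finD: "finite D" and k2: "\<forall>h\<in>H. 2 \<le> \<kappa> h"
    and sumk: "(\<Sum>h\<in>H. \<kappa> h) = card D" and cH: "2 \<le> card H" and cD: "4 \<le> card D"
    and injfst: "inj_on fst C" and injsnd: "inj_on snd C" and disj1: "fst ` C \<inter> snd ` C = {}"
    using model unfolding standing_model_def D_def doctors_def by auto
  have P0pref: "pref_on (insert None (Some ` D)) P0" using P0 unfolding indiv_hosp_pref_def D_def by auto
  interpret rk: rankctx D P0 using finD P0pref by unfold_locales
  have w_iff: "d \<in> D \<Longrightarrow> e \<in> D \<Longrightarrow> (Some d, Some e) \<in> P0 \<longleftrightarrow> w e < w d" for d e
    unfolding w_def using rk.wt_iff by blast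
  have w_eq: "d \<in> D \<Longrightarrow> e \<in> D \<Longrightarrow> w d = w e \<longleftrightarrow> d = e" for d e
    using rk.wt_inj unfolding w_def inj_on_def by blast
  have w_lt: "d \<in> D \<Longrightarrow> w d < card D" for d unfolding w_def using rk.wt_lt by blast
  have w_ex: "i < card D \<Longrightarrow> \<exists>d\<in>D. w d = i" for i unfolding w_def using rk.wt_ex by blast
  have CD: "(a, b) \<in> C \<Longrightarrow> a \<in> D \<and> b \<in> D" for a b unfolding D_def doctors_def by force
  have Cw: "(a, b) \<in> C \<Longrightarrow> w b < w a" for a b using labels CD w_iff by blast
  have Cfst: "(a, b) \<in> C \<Longrightarrow> (a, b') \<in> C \<Longrightarrow> b = b'" for a b b'
    using injfst unfolding inj_on_def by force
  have Csnd: "(a, b) \<in> C \<Longrightarrow> (a', b) \<in> C \<Longrightarrow> a = a'" for a a' b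
    using injsnd unfolding inj_on_def by force
  have Cnb: "(a, b) \<in> C \<Longrightarrow> (b', a) \<in> C \<Longrightarrow> False" for a b b' using disj1 by force
  define btw where "btw f m = {d\<in>D. w m < w d \<and> w d < w f}" for f m
  define abv where "abv m = {d\<in>D. w m < w d}" for m
  have lowest_iff: "(\<forall>d\<in>D. d \<noteq> m \<longrightarrow> (Some d, Some m) \<in> P0) \<longleftrightarrow> w m = 0" if mD: "m \<in> D" for m
  proof
    assume a: "\<forall>d\<in>D. d \<noteq> m \<longrightarrow> (Some d, Some m) \<in> P0"
    show "w m = 0"
    proof (rule ccontr)
      assume n: "w m \<noteq> 0"
      obtain d where d: "d \<in> D" "w d = 0" using w_ex cD by fastforce
      then have "d \<noteq> m" using n by auto
      then have "w m < w d" using a d w_iff mD by blast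
      then show False using d by simp
    qed
  next
    assume a: "w m = 0"
    show "\<forall>d\<in>D. d \<noteq> m \<longrightarrow> (Some d, Some m) \<in> P0"
    proof (intro ballI impI)
      fix d assume d: "d \<in> D" "d \<noteq> m"
      then have "w d \<noteq> w m" using w_eq mD by blast
      then show "(Some d, Some m) \<in> P0" using w_iff[OF d(1) mD] a by simp
    qed
  qed
  have btw_eq: "{d\<in>D. (Some f, Some d) \<in> P0 \<and> (Some d, Some m) \<in> P0} = btw f m"
    if "f \<in> D" "m \<in> D" for f m
    unfolding btw_def using w_iff that by blast
  have abv_eq: "{d\<in>D. (Some d, Some m) \<in> P0} = abv m" if "m \<in> D" for m
    unfolding abv_def using w_iff that by blast
  define wform where "wform f m = ((w m \<noteq> 0 \<longrightarrow> (card (btw f m) = 0 \<or> (\<forall>h\<in>H. card (abv m) < \<kappa> h))) \<and>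
      (w m = 0 \<longrightarrow> card (btw f m) \<le> 1))" for f m
  have "\<exists>(f, m)\<in>C. \<not> wform f m"
  proof (rule ccontr)
    assume "\<not> ?thesis"
    then have all: "\<forall>(f, m)\<in>C. wform f m" by blast
    have "SCPI H \<kappa> S C P0"
      unfolding SCPI_def Let_def D_def[symmetric]
    proof (intro ballI, clarify)
      fix f m assume c: "(f, m) \<in> C"
      have fD: "f \<in> D" and mD: "m \<in> D" using CD[OF c] by auto
      have wf: "wform f m" using all c by blast
      show "((\<not> (\<forall>d\<in>D. d \<noteq> m \<longrightarrow> (Some d, Some m) \<in> P0)) \<longrightarrow>
             card {d \<in> D. (Some f, Some d) \<in> P0 \<and> (Some d, Some m) \<in> P0} = 0 \<or>
             (\<forall>h\<in>H. card {d \<in> D. (Some d, Some m) \<in> P0} < \<kappa> h)) \<and>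
            ((\<forall>d\<in>D. d \<noteq> m \<longrightarrow> (Some d, Some m) \<in> P0) \<longrightarrow>
             card {d \<in> D. (Some f, Some d) \<in> P0 \<and> (Some d, Some m) \<in> P0} \<le> 1)"
        unfolding lowest_iff[OF mD] btw_eq[OF fD mD] abv_eq[OF mD] using wf unfolding wform_def .
    qed
    then show False using notSCPI by blast
  qed
  then obtain f0 m0 where c0: "(f0, m0) \<in> C" and nw0: "\<not> wform f0 m0" by blast
  have sum12: "\<kappa> h1 + \<kappa> h2 \<le> card D" if "h1 \<in> H" "h2 \<in> H" "h1 \<noteq> h2" for h1 h2
  proof -
    have "(\<Sum>h\<in>{h1, h2}. \<kappa> h) \<le> (\<Sum>h\<in>H. \<kappa> h)" using that finH by (intro sum_mono2) auto
    then show ?thesis using that sumk by simp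
  qed
  obtain h1 where h1: "h1 \<in> H" using cH by fastforce
  have "H - {h1} \<noteq> {}"
  proof
    assume "H - {h1} = {}"
    then have "H \<subseteq> {h1}" by blast
    then have "card H \<le> 1" using card_mono[of "{h1}" H] by simp
    then show False using cH by simp
  qed
  then obtain h1' where h1': "h1' \<in> H" "h1' \<noteq> h1" by blast
  have two: "\<exists>h'\<in>H. h' \<noteq> h" if "h \<in> H" for h
    using h1 h1' by metis
  note fs = final_step[OF model P0 labels]
  show ?thesis
  proof (cases "\<exists>(f, m)\<in>C. w m = 0 \<and> 1 < card (btw f m)")
    case True
    then obtain f m where c: "(f, m) \<in> C" and wm: "w m = 0" and b1: "1 < card (btw f m)" by blast
    have fD: "f \<in> D" and mD: "m \<in> D" using CD[OF c] by auto
    have wf3: "3 \<le> w f"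
    proof -
      have "w ` btw f m \<subseteq> {1..<w f}" unfolding btw_def using wm by auto
      moreover have "inj_on w (btw f m)" using rk.wt_inj unfolding w_def btw_def by (rule inj_on_subset) auto
      ultimately have "card (btw f m) \<le> card {1..<w f}" using card_inj_on_le by blast
      then show ?thesis using b1 by simp
    qed
    have lt2: "2 < card D" using w_lt[OF fD] wf3 by simp
    obtain g1 where g1: "g1 \<in> D" "w g1 = 2" using w_ex lt2 by blast
    have "\<exists>d\<in>D. w d = 1" using w_ex[of 1] lt2 by simp
    then obtain g2 where g2: "g2 \<in> D" "w g2 = 1" by blast
    obtain h2 where h2: "h2 \<in> H" "h2 \<noteq> h1" using two[OF h1] by blast
    have dist: "g1 \<noteq> f" "g1 \<noteq> m" "g2 \<noteq> f" "g2 \<noteq> m" "g1 \<noteq> g2" using g1 g2 wm wf3 by auto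
    have enough: "\<kappa> h1 - 2 \<le> card {v \<in> D - {f, g1, m, g2}. w g1 < w v}"
    proof -
      have eq: "{v \<in> D - {f, g1, m, g2}. w g1 < w v} = D - {f, g1, m, g2}"
      proof (intro equalityI subsetI)
        fix v assume v: "v \<in> D - {f, g1, m, g2}"
        then have "w v \<noteq> 0" "w v \<noteq> 1" "w v \<noteq> 2" using w_eq[of v m] w_eq[of v g2] w_eq[of v g1] mD g1 g2 wm by auto
        then show "v \<in> {v \<in> D - {f, g1, m, g2}. w g1 < w v}" using v g1 by auto
      qed auto
      have GD: "{f, g1, m, g2} \<subseteq> D" using fD mD g1 g2 by auto
      have fmne: "f \<noteq> m" using Cw[OF c] by auto
      have "card {f, g1, m, g2} = 4" using dist fmne by auto
      then have "card (D - {f, g1, m, g2}) = card D - 4" using card_Diff_subset[OF _ GD] by simp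
      moreover have "2 \<le> \<kappa> h2" using k2 h2 by blast
      ultimately show ?thesis unfolding eq using sum12[OF h1 h2(1) h2(2)[symmetric]] by linarith
    qed
    show ?thesis
    proof (rule fs[OF c g1(1)[unfolded D_def] g2(1)[unfolded D_def] dist h1 h2(1) h2(2)[symmetric]])
      show "wt (doctors S C) P0 m < wt (doctors S C) P0 g1" "wt (doctors S C) P0 g1 < wt (doctors S C) P0 f"
        "wt (doctors S C) P0 g2 < wt (doctors S C) P0 g1"
        using wm g1 g2 wf3 unfolding w_def D_def by auto
      show "m \<in> doctors S C" using mD unfolding D_def .
      show "\<forall>d\<in>doctors S C. wt (doctors S C) P0 m \<le> wt (doctors S C) P0 d" using wm unfolding w_def D_def by simp
      show "\<forall>a. (a, m) \<in> C \<longrightarrow> a \<in> {f, g1, m, g2}" using Csnd c by blast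
      show "wt (doctors S C) P0 m < wt (doctors S C) P0 g2 \<or> g2 = m \<or> (g2, m) \<in> C"
        using wm g2 unfolding w_def D_def by simp
      show "\<kappa> h1 - 2 \<le> card {v \<in> doctors S C - {f, g1, m, g2}. wt (doctors S C) P0 g1 < wt (doctors S C) P0 v}"
        using enough unfolding w_def D_def .
    qed
  next
    case noB: False
    have wm0: "w m0 \<noteq> 0"
    proof
      assume "w m0 = 0"
      then have "card (btw f0 m0) \<le> 1" using noB c0 by fastforce
      then show False using nw0 \<open>w m0 = 0\<close> unfolding wform_def by simp
    qed
    have bt: "card (btw f0 m0) \<noteq> 0" and "\<not> (\<forall>h\<in>H. card (abv m0) < \<kappa> h)"
      using nw0 wm0 unfolding wform_def by auto
    then obtain ha where ha: "ha \<in> H" "\<kappa> ha \<le> card (abv m0)" by (meson not_less)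
    have fD: "f0 \<in> D" and mD: "m0 \<in> D" using CD[OF c0] by auto
    obtain d0 where "d0 \<in> btw f0 m0" using bt by (metis card.empty ex_in_conv)
    then have d0: "d0 \<in> D" "w m0 < w d0" "w d0 < w f0" unfolding btw_def by auto
    have ltf: "w m0 + 1 < card D" using w_lt[OF fD] d0 by simp
    obtain g1 where g1: "g1 \<in> D" "w g1 = w m0 + 1" using w_ex ltf by blast
    obtain z where z: "z \<in> D" "w z = 0" using w_ex cD by fastforce
    obtain h2 where h2: "h2 \<in> H" "h2 \<noteq> ha" using two[OF ha(1)] by blast
    have g1f: "w g1 < w f0" using g1 d0 by simp
    have abv_split: "abv m0 = insert g1 {d\<in>D. w g1 < w d}"
    proof (intro equalityI subsetI)
      fix d assume d: "d \<in> abv m0"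
      then have dD: "d \<in> D" "w m0 < w d" unfolding abv_def by auto
      show "d \<in> insert g1 {d\<in>D. w g1 < w d}"
      proof (cases "w d = w g1")
        case True then show ?thesis using w_eq[OF dD(1) g1(1)] by simp
      next
        case False then show ?thesis using dD g1 by auto
      qed
    next
      fix d assume "d \<in> insert g1 {d\<in>D. w g1 < w d}"
      then show "d \<in> abv m0" unfolding abv_def using g1 by auto
    qed
    have cab: "card {d\<in>D. w g1 < w d} + 1 = card (abv m0)"
    proof -
      have "g1 \<notin> {d\<in>D. w g1 < w d}" by simp
      moreover have "finite {d\<in>D. w g1 < w d}" using finD by simp
      ultimately show ?thesis unfolding abv_split by simp
    qed
    have enough_gen: "\<kappa> ha - 2 \<le> card {v \<in> D - {f0, g1, m0, g2}. w g1 < w v}" if g2: "w g2 < w g1" for g2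
    proof -
      have sub: "{d\<in>D. w g1 < w d} - {f0} \<subseteq> {v \<in> D - {f0, g1, m0, g2}. w g1 < w v}"
        using g1 g2 by auto
      have "card ({d\<in>D. w g1 < w d} - {f0}) \<le> card {v \<in> D - {f0, g1, m0, g2}. w g1 < w v}"
        using finD by (intro card_mono[OF _ sub]) simp
      moreover have "card {d\<in>D. w g1 < w d} - 1 \<le> card ({d\<in>D. w g1 < w d} - {f0})"
        using card_Diff_singleton_if[of "{d\<in>D. w g1 < w d}" f0] finD by (auto split: if_splits)
      ultimately show ?thesis using cab ha(2) by linarith
    qed
    have g1nz: "g1 \<noteq> z" "g1 \<noteq> f0" "g1 \<noteq> m0" using g1 z g1f by auto
    show ?thesis
    proof (cases "\<exists>q. (q, z) \<in> C \<and> q \<noteq> g1")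
      case True
      then obtain q where q: "(q, z) \<in> C" "q \<noteq> g1" by blast
      have qD: "q \<in> D" using CD[OF q(1)] by auto
      have qf: "q \<noteq> f0"
      proof
        assume "q = f0"
        then have "z = m0" using Cfst q(1) c0 by blast
        then show False using z wm0 by simp
      qed
      have qm: "q \<noteq> m0" using Cnb[OF q(1)] c0 by blast
      have wq2: "w q \<le> 2"
      proof (rule ccontr)
        assume n: "\<not> w q \<le> 2"
        then have lt: "2 < card D" using w_lt[OF qD] by simp
        have "\<exists>d\<in>D. w d = 1" using w_ex[of 1] lt by simp
        then obtain d1 where d1: "d1 \<in> D" "w d1 = 1" by blast
        have "\<exists>d\<in>D. w d = 2" using w_ex[of 2] lt by simp
        then obtain d2 where d2: "d2 \<in> D" "w d2 = 2" by blast
        have "{d1, d2} \<subseteq> btw q z" unfolding btw_def using d1 d2 z n by auto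
        moreover have "finite (btw q z)" unfolding btw_def using finD by simp
        ultimately have "card {d1, d2} \<le> card (btw q z)" by (rule card_mono[rotated])
        moreover have "d1 \<noteq> d2" using d1 d2 by auto
        ultimately have "2 \<le> card (btw q z)" by simp
        then show False using noB q(1) z(2) by fastforce
      qed
      have wqg: "w q < w g1"
      proof (rule ccontr)
        assume "\<not> w q < w g1"
        then have "w q = w g1" using wq2 g1 wm0 by simp
        then show False using w_eq[OF qD g1(1)] q(2) by simp
      qed
      have dist: "g1 \<noteq> f0" "g1 \<noteq> m0" "q \<noteq> f0" "q \<noteq> m0" "g1 \<noteq> q" using g1nz qf qm q(2) by auto
      show ?thesis
      proof (rule fs[OF c0 g1(1)[unfolded D_def] qD[unfolded D_def] dist ha(1) h2(1) h2(2)[symmetric]])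
        show "wt (doctors S C) P0 m0 < wt (doctors S C) P0 g1" "wt (doctors S C) P0 g1 < wt (doctors S C) P0 f0"
          "wt (doctors S C) P0 q < wt (doctors S C) P0 g1"
          using g1 g1f wqg unfolding w_def D_def by auto
        show "z \<in> doctors S C" using z unfolding D_def by simp
        show "\<forall>d\<in>doctors S C. wt (doctors S C) P0 z \<le> wt (doctors S C) P0 d" using z unfolding w_def D_def by simp
        show "\<forall>a. (a, z) \<in> C \<longrightarrow> a \<in> {f0, g1, m0, q}" using Csnd q(1) by blast
        show "wt (doctors S C) P0 m0 < wt (doctors S C) P0 q \<or> q = z \<or> (q, z) \<in> C" using q by simp
        show "\<kappa> ha - 2 \<le> card {v \<in> doctors S C - {f0, g1, m0, q}. wt (doctors S C) P0 g1 < wt (doctors S C) P0 v}"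
          using enough_gen[OF wqg] unfolding w_def D_def .
      qed
    next
      case False
      have zg: "w z < w g1" using z g1 by simp
      have dist: "g1 \<noteq> f0" "g1 \<noteq> m0" "z \<noteq> f0" "z \<noteq> m0" "g1 \<noteq> z" using g1nz z g1f wm0 by auto
      show ?thesis
      proof (rule fs[OF c0 g1(1)[unfolded D_def] z(1)[unfolded D_def] dist ha(1) h2(1) h2(2)[symmetric]])
        show "wt (doctors S C) P0 m0 < wt (doctors S C) P0 g1" "wt (doctors S C) P0 g1 < wt (doctors S C) P0 f0"
          "wt (doctors S C) P0 z < wt (doctors S C) P0 g1"
          using g1 g1f zg unfolding w_def D_def by auto
        show "z \<in> doctors S C" using z unfolding D_def by simp
        show "\<forall>d\<in>doctors S C. wt (doctors S C) P0 z \<le> wt (doctors S C) P0 d" using z unfolding w_def D_def by simp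
        show "\<forall>a. (a, z) \<in> C \<longrightarrow> a \<in> {f0, g1, m0, z}" using False by blast
        show "wt (doctors S C) P0 m0 < wt (doctors S C) P0 z \<or> z = z \<or> (z, z) \<in> C" by simp
        show "\<kappa> ha - 2 \<le> card {v \<in> doctors S C - {f0, g1, m0, z}. wt (doctors S C) P0 g1 < wt (doctors S C) P0 v}"
          using enough_gen[OF zg] unfolding w_def D_def .
      qed
    qed
  qed
qed


end
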